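(* Consider the problem $$(\mathrm{CP})\qquad\inf_{\mathbf x\in\mathbb R^n}\{f(\mathbf x): g_i(\mathbf x)\le0,\ i=1,\dots,m\},$$ where $f=s_0+p_0$ and $g_i=s_i+p_i$ ($i=1,\dots,m$) are convex polynomials such that, for each $i=0,1,\dots,m$, $s_i(\mathbf x)=\sum_{j=1}^n u_i^j(x_j)$ with each $u_i^j$ a convex univariate polynomial in $x_j$ of degree at most $2d_j$, and $p_i$ is an SOS-convex polynomial of degree at most $2r$. Let $d_0:=\max_{1\le j\le n}d_j$ and assume $d_0>r$ and that $f$ is bounded from below on the feasible set $\mathbf F=\{\mathbf x: g_i(\mathbf x)\le0,\ i=1,\dots,m\}$. Assume there exists $\widehat{\mathbf x}\in\mathbf F$ with $g_i(\widehat{\mathbf x})<0$ for all $i=1,\dots,m$. Then, with the problems $(\mathrm D^{\mathrm{SPLD}}_{\mathrm{sos}})$ and $(\widetilde{\mathrm D}^{\mathrm{SPLD}}_{\mathrm{sos}})$ defined in the context, $$\mathrm{val}(\mathrm{CP})=\mathrm{val}(\mathrm D^{\mathrm{SPLD}}_{\mathrm{sos}})=\mathrm{val}(\widetilde{\mathrm D}^{\mathrm{SPLD}}_{\mathrm{sos}}),$$ and $(\mathrm D^{\mathrm{SPLD}}_{\mathrm{sos}})$ has an optimal solution.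
   Context: A polynomial is SOS-convex if its Hessian is an SOS matrix polynomial, i.e., $\nabla^2 p(\mathbf x)=F(\mathbf x)^TF(\mathbf x)$ for some matrix polynomial $F$. $\Sigma[\mathbf x]_r$: sums of squares of polynomials in $\mathbf x$ of degree $\le 2r$; $\Sigma[x_j]_{d}$: SOS univariate polynomials in $x_j$ of degree $\le 2d$. $\mathbb N^n_d=\{\boldsymbol\alpha\in\mathbb N^n:|\boldsymbol\alpha|\le d\}$; $\lceil\mathbf x\rceil_r=(\mathbf x^{\boldsymbol\alpha})_{\boldsymbol\alpha\in\mathbb N^n_r}$, of length $s(n,r)=\binom{n+r}{r}$; $\lceil x_j\rceil_{d}=(1,x_j,\dots,x_j^{d})^T$; $(M)_{\boldsymbol\alpha}$ is the coefficient matrix of $\mathbf x^{\boldsymbol\alpha}$ in a polynomial matrix $M$, and $h_{\boldsymbol\alpha}$ the coefficient of $\mathbf x^{\boldsymbol\alpha}$ in a polynomial $h$. $(\mathrm D^{\mathrm{SPLD}}_{\mathrm{sos}})$: maximize $\mu$ over $\mu\in\mathbb R$, $\lambda_i\ge0$ ($i=1,\dots,m$), $\sigma\in\Sigma[\mathbf x]_r$, $\sigma_j\in\Sigma[x_j]_{d_j}$ ($j=1,\dots,n$), subject to the polynomial identity $f+\sum_{i=1}^m\lambda_ig_i-\mu=\sigma+\sum_{j=1}^n\sigma_j$. $(\widetilde{\mathrm D}^{\mathrm{SPLD}}_{\mathrm{sos}})$: minimize $\sum_{\boldsymbol\alpha\in\mathbb N^n_{2d_0}}f_{\boldsymbol\alpha}y_{\boldsymbol\alpha}$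 over $\mathbf y=(y_{\boldsymbol\alpha})_{\boldsymbol\alpha\in\mathbb N^n_{2d_0}}\in\mathbb R^{s(n,2d_0)}$ subject to $\sum_{\boldsymbol\alpha\in\mathbb N^n_{2d_0}}(g_i)_{\boldsymbol\alpha}y_{\boldsymbol\alpha}\le0$, $i=1,\dots,m$; $\sum_{\boldsymbol\alpha\in\mathbb N^n_{2d_0}}y_{\boldsymbol\alpha}(\lceil x_j\rceil_{d_j}\lceil x_j\rceil_{d_j}^T)_{\boldsymbol\alpha}\succeq0$, $j=1,\dots,n$; $\sum_{\boldsymbol\alpha\in\mathbb N^n_{2d_0}}y_{\boldsymbol\alpha}(\lceil\mathbf x\rceil_r\lceil\mathbf x\rceil_r^T)_{\boldsymbol\alpha}\succeq0$; $y_{\mathbf 0}=1$. *)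

theory Defs
  imports "HOL-Analysis.Analysis" "HOL-Computational_Algebra.Polynomial"
begin

text \<open>Multivariate real polynomials in the variables x$j (j :: 'n, n = CARD('n))
  are represented by coefficient functions c :: ('n \<Rightarrow> nat) \<Rightarrow> real,
  exponent vectors alpha :: 'n \<Rightarrow> nat.\<close>

definition exps :: "nat \<Rightarrow> ('n::finite \<Rightarrow> nat) set" where
  "exps D = {\<alpha>. sum \<alpha> UNIV \<le> D}"

definition mon :: "('n::finite \<Rightarrow> nat) \<Rightarrow> real^'n \<Rightarrow> real" where
  "mon \<alpha> x = (\<Prod>j\<in>UNIV. (x $ j) ^ (\<alpha> j))"

definition is_mpoly :: "(('n::finite \<Rightarrow> nat) \<Rightarrow> real) \<Rightarrow> bool" where
  "is_mpoly c \<longleftrightarrow> finite {\<alpha>. c \<alpha> \<noteq> 0}"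

definition mpoly_deg_le :: "nat \<Rightarrow> (('n::finite \<Rightarrow> nat) \<Rightarrow> real) \<Rightarrow> bool" where
  "mpoly_deg_le D c \<longleftrightarrow> (\<forall>\<alpha>. c \<alpha> \<noteq> 0 \<longrightarrow> \<alpha> \<in> exps D)"

definition peval :: "(('n::finite \<Rightarrow> nat) \<Rightarrow> real) \<Rightarrow> real^'n \<Rightarrow> real" where
  "peval c x = (\<Sum>\<alpha>\<in>{\<alpha>. c \<alpha> \<noteq> 0}. c \<alpha> * mon \<alpha> x)"

definition pdiff :: "'n \<Rightarrow> (('n::finite \<Rightarrow> nat) \<Rightarrow> real) \<Rightarrow> ('n \<Rightarrow> nat) \<Rightarrow> real" where
  "pdiff j c = (\<lambda>\<alpha>. real (\<alpha> j + 1) * c (\<alpha>(j := \<alpha> j + 1)))"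

definition sos_convex :: "(('n::finite \<Rightarrow> nat) \<Rightarrow> real) \<Rightarrow> bool" where
  "sos_convex c \<longleftrightarrow>
     (\<exists>(K::nat) (F :: nat \<Rightarrow> 'n \<Rightarrow> (('n \<Rightarrow> nat) \<Rightarrow> real)).
        (\<forall>t<K. \<forall>k. is_mpoly (F t k)) \<and>
        (\<forall>k l x. peval (pdiff k (pdiff l c)) x = (\<Sum>t<K. peval (F t k) x * peval (F t l) x)))"

definition sos_mpoly :: "nat \<Rightarrow> (real^'n::finite \<Rightarrow> real) \<Rightarrow> bool" where
  "sos_mpoly r \<sigma> \<longleftrightarrow>
     (\<exists>(K::nat) (q :: nat \<Rightarrow> ('n \<Rightarrow> nat) \<Rightarrow> real).
        (\<forall>k<K. mpoly_deg_le r (q k)) \<and> (\<forall>x. \<sigma> x = (\<Sum>k<K. (peval (q k) x)^2)))"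

definition sos_upoly :: "nat \<Rightarrow> real poly \<Rightarrow> bool" where
  "sos_upoly d s \<longleftrightarrow>
     (\<exists>(K::nat) (q :: nat \<Rightarrow> real poly). (\<forall>k<K. degree (q k) \<le> d) \<and> s = (\<Sum>k<K. (q k)^2))"

definition psd_on :: "'a set \<Rightarrow> ('a \<Rightarrow> 'a \<Rightarrow> real) \<Rightarrow> bool" where
  "psd_on E M \<longleftrightarrow> (\<forall>v. 0 \<le> (\<Sum>a\<in>E. \<Sum>b\<in>E. v a * M a b * v b))"

definition d0 :: "('n::finite \<Rightarrow> nat) \<Rightarrow> nat" where
  "d0 d = Max (range d)"

definition feas_D :: "nat \<Rightarrow> nat \<Rightarrow> ('n::finite \<Rightarrow> nat)
    \<Rightarrow> (('n \<Rightarrow> nat) \<Rightarrow> real) \<Rightarrow> (nat \<Rightarrow> ('n \<Rightarrow> nat) \<Rightarrow> real)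
    \<Rightarrow> real \<Rightarrow> (nat \<Rightarrow> real) \<Rightarrow> (real^'n \<Rightarrow> real) \<Rightarrow> ('n \<Rightarrow> real poly) \<Rightarrow> bool" where
  "feas_D m r d fc gc \<mu> lam \<sigma> \<sigma>s \<longleftrightarrow>
     (\<forall>i\<in>{1..m}. 0 \<le> lam i) \<and> sos_mpoly r \<sigma> \<and> (\<forall>j. sos_upoly (d j) (\<sigma>s j)) \<and>
     (\<forall>x. peval fc x + (\<Sum>i=1..m. lam i * peval (gc i) x) - \<mu>
            = \<sigma> x + (\<Sum>j\<in>UNIV. poly (\<sigma>s j) (x $ j)))"

definition feas_Dt :: "nat \<Rightarrow> nat \<Rightarrow> ('n::finite \<Rightarrow> nat)
    \<Rightarrow> (nat \<Rightarrow> ('n \<Rightarrow> nat) \<Rightarrow> real) \<Rightarrow> (('n \<Rightarrow> nat) \<Rightarrow> real) \<Rightarrow> bool" where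
  "feas_Dt m r d gc y \<longleftrightarrow>
     (\<forall>i\<in>{1..m}. (\<Sum>\<alpha>\<in>exps (2 * d0 d). gc i \<alpha> * y \<alpha>) \<le> 0) \<and>
     (\<forall>j. psd_on {0..d j}
            (\<lambda>a b. \<Sum>\<alpha>\<in>exps (2 * d0 d).
                 y \<alpha> * (if \<alpha> = (\<lambda>k. if k = j then a + b else 0) then 1 else 0))) \<and>
     psd_on (exps r)
            (\<lambda>\<beta> \<gamma>. \<Sum>\<alpha>\<in>exps (2 * d0 d).
                 y \<alpha> * (if \<alpha> = (\<lambda>k. \<beta> k + \<gamma> k) then 1 else 0)) \<and>
     y (\<lambda>_. 0) = 1"

definition obj_Dt :: "('n::finite \<Rightarrow> nat) \<Rightarrow> (('n \<Rightarrow> nat) \<Rightarrow> real) \<Rightarrow> (('n \<Rightarrow> nat) \<Rightarrow> real) \<Rightarrow> real" where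
  "obj_Dt d fc y = (\<Sum>\<alpha>\<in>exps (2 * d0 d). fc \<alpha> * y \<alpha>)"

definition feas_CP :: "nat \<Rightarrow> (nat \<Rightarrow> ('n::finite \<Rightarrow> nat) \<Rightarrow> real) \<Rightarrow> (real^'n) set" where
  "feas_CP m gc = {x. \<forall>i\<in>{1..m}. peval (gc i) x \<le> 0}"

definition val_CP :: "nat \<Rightarrow> (('n::finite \<Rightarrow> nat) \<Rightarrow> real) \<Rightarrow> (nat \<Rightarrow> ('n \<Rightarrow> nat) \<Rightarrow> real) \<Rightarrow> real" where
  "val_CP m fc gc = Inf (peval fc ` feas_CP m gc)"

end

theory Submission
  imports Defs "HOL-Computational_Algebra.Fundamental_Theorem_Algebra"
begin

lemma finite_exps[simp]: "finite (exps D :: ('n::finite \<Rightarrow> nat) set)"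
proof -
  have "(exps D :: ('n \<Rightarrow> nat) set) \<subseteq> PiE UNIV (\<lambda>_. {..D})"
  proof
    fix \<alpha> :: "'n \<Rightarrow> nat" assume "\<alpha> \<in> exps D"
    then have s: "sum \<alpha> UNIV \<le> D" by (simp add: exps_def)
    have "\<alpha> j \<le> sum \<alpha> UNIV" for j by (rule member_le_sum) auto
    then have "\<forall>j. \<alpha> j \<le> D" using s order_trans by blast
    then show "\<alpha> \<in> PiE UNIV (\<lambda>_. {..D})" by (simp add: PiE_iff extensional_def)
  qed
  moreover have "finite (PiE (UNIV::'n set) (\<lambda>_. {..D}))" by (rule finite_PiE) auto
  ultimately show ?thesis by (rule finite_subset)
qed

lemma exps_mono: "D \<le> E \<Longrightarrow> exps D \<subseteq> exps E"
  by (auto simp: exps_def)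

lemma exps_add: "\<alpha> \<in> exps D \<Longrightarrow> \<beta> \<in> exps E \<Longrightarrow> (\<lambda>k. \<alpha> k + \<beta> k) \<in> exps (D + E)"
  by (auto simp: exps_def sum.distrib)

lemma mon_add: "mon (\<lambda>k. \<alpha> k + \<beta> k) x = mon \<alpha> x * mon \<beta> x"
  by (simp add: mon_def power_add prod.distrib)

lemma mon_zero[simp]: "mon (\<lambda>_. 0) x = 1"
  by (simp add: mon_def)

definition pf :: "nat \<Rightarrow> (real^'n::finite \<Rightarrow> real) \<Rightarrow> bool" where
  "pf D f \<longleftrightarrow> (\<exists>a. \<forall>x. f x = (\<Sum>\<alpha>\<in>exps D. a \<alpha> * mon \<alpha> x))"

lemma pf_sumrep:
  assumes "finite A" "A \<subseteq> exps D"
  shows "pf D (\<lambda>x. \<Sum>\<alpha>\<in>A. a \<alpha> * mon \<alpha> x)"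
  unfolding pf_def
proof (intro exI allI)
  fix x
  have "(\<Sum>\<alpha>\<in>exps D. (if \<alpha> \<in> A then a \<alpha> else 0) * mon \<alpha> x) = (\<Sum>\<alpha>\<in>A. (if \<alpha> \<in> A then a \<alpha> else 0) * mon \<alpha> x)"
    by (rule sum.mono_neutral_right) (use assms in auto)
  then show "(\<Sum>\<alpha>\<in>A. a \<alpha> * mon \<alpha> x) = (\<Sum>\<alpha>\<in>exps D. (if \<alpha> \<in> A then a \<alpha> else 0) * mon \<alpha> x)"
    by simp
qed

lemma pf_mono: "pf D f \<Longrightarrow> D \<le> E \<Longrightarrow> pf E f"
proof -
  assume "pf D f" "D \<le> E"
  then obtain a where a: "\<And>x. f x = (\<Sum>\<alpha>\<in>exps D. a \<alpha> * mon \<alpha> x)" by (auto simp: pf_def)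
  have "pf E (\<lambda>x. \<Sum>\<alpha>\<in>exps D. a \<alpha> * mon \<alpha> x)"
    by (rule pf_sumrep) (use exps_mono[OF \<open>D \<le> E\<close>] in auto)
  then show ?thesis using a by (simp add: pf_def)
qed

lemma pf_mon: "\<alpha> \<in> exps D \<Longrightarrow> pf D (mon \<alpha>)"
  using pf_sumrep[of "{\<alpha>}" D "\<lambda>_. 1"] by simp

lemma pf_cong: "pf D f \<Longrightarrow> (\<And>x. f x = g x) \<Longrightarrow> pf D g"
  unfolding pf_def by auto

lemma pf_const: "pf D (\<lambda>x. c)"
proof -
  have "(\<lambda>_. 0) \<in> exps D" by (simp add: exps_def)
  then show ?thesis using pf_sumrep[of "{\<lambda>_. 0}" D "\<lambda>_. c"] by simp
qed

lemma pf_add: "pf D f \<Longrightarrow> pf D g \<Longrightarrow> pf D (\<lambda>x. f x + g x)"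
  unfolding pf_def
proof (elim exE)
  fix a b assume "\<forall>x. f x = (\<Sum>\<alpha>\<in>exps D. a \<alpha> * mon \<alpha> x)" "\<forall>x. g x = (\<Sum>\<alpha>\<in>exps D. b \<alpha> * mon \<alpha> x)"
  then show "\<exists>c. \<forall>x. f x + g x = (\<Sum>\<alpha>\<in>exps D. c \<alpha> * mon \<alpha> x)"
    by (intro exI[of _ "\<lambda>\<alpha>. a \<alpha> + b \<alpha>"]) (simp add: sum.distrib distrib_right)
qed

lemma pf_cmult: "pf D f \<Longrightarrow> pf D (\<lambda>x. c * f x)"
  unfolding pf_def
proof (elim exE)
  fix a assume "\<forall>x. f x = (\<Sum>\<alpha>\<in>exps D. a \<alpha> * mon \<alpha> x)"
  then show "\<exists>b. \<forall>x. c * f x = (\<Sum>\<alpha>\<in>exps D. b \<alpha> * mon \<alpha> x)"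
    by (intro exI[of _ "\<lambda>\<alpha>. c * a \<alpha>"]) (simp add: sum_distrib_left mult.assoc)
qed

lemma pf_neg: "pf D f \<Longrightarrow> pf D (\<lambda>x. - f x)"
  using pf_cmult[of D f "-1"] by simp

lemma pf_diff: "pf D f \<Longrightarrow> pf D g \<Longrightarrow> pf D (\<lambda>x. f x - g x)"
  using pf_add[of D f "\<lambda>x. - g x"] pf_neg[of D g] by simp

lemma pf_sum: "finite I \<Longrightarrow> (\<And>i. i \<in> I \<Longrightarrow> pf D (f i)) \<Longrightarrow> pf D (\<lambda>x. \<Sum>i\<in>I. f i x)"
proof (induction I rule: finite_induct)
  case empty then show ?case using pf_const[of D 0] by simp
next
  case (insert i I) then show ?case using pf_add[of D "f i" "\<lambda>x. \<Sum>i\<in>I. f i x"] by simp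
qed

lemma pf_mon_mult:
  assumes "\<alpha> \<in> exps D" "pf E g"
  shows "pf (D + E) (\<lambda>x. mon \<alpha> x * g x)"
proof -
  from assms(2) obtain b where b: "\<And>x. g x = (\<Sum>\<beta>\<in>exps E. b \<beta> * mon \<beta> x)" by (auto simp: pf_def)
  have inj: "inj_on (\<lambda>\<beta> k. \<alpha> k + \<beta> k) (exps E)" by (auto simp: inj_on_def fun_eq_iff)
  have "mon \<alpha> x * g x = (\<Sum>\<gamma>\<in>(\<lambda>\<beta> k. \<alpha> k + \<beta> k) ` exps E. b (\<lambda>k. \<gamma> k - \<alpha> k) * mon \<gamma> x)" for x
  proof -
    have "(\<Sum>\<gamma>\<in>(\<lambda>\<beta> k. \<alpha> k + \<beta> k) ` exps E. b (\<lambda>k. \<gamma> k - \<alpha> k) * mon \<gamma> x)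
        = (\<Sum>\<beta>\<in>exps E. b \<beta> * mon (\<lambda>k. \<alpha> k + \<beta> k) x)"
      by (subst sum.reindex[OF inj]) (simp add: o_def)
    also have "\<dots> = mon \<alpha> x * g x"
      by (simp add: b sum_distrib_left mon_add mult.commute mult.left_commute)
    finally show ?thesis by simp
  qed
  moreover have "pf (D + E) (\<lambda>x. \<Sum>\<gamma>\<in>(\<lambda>\<beta> k. \<alpha> k + \<beta> k) ` exps E. b (\<lambda>k. \<gamma> k - \<alpha> k) * mon \<gamma> x)"
    by (rule pf_sumrep) (use assms(1) exps_add in auto)
  ultimately show ?thesis by (simp add: pf_cong)
qed

lemma pf_mult: "pf D f \<Longrightarrow> pf E g \<Longrightarrow> pf (D + E) (\<lambda>x. f x * g x)"
proof -
  assume "pf D f" "pf E g"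
  then obtain a where a: "\<And>x. f x = (\<Sum>\<alpha>\<in>exps D. a \<alpha> * mon \<alpha> x)" by (auto simp: pf_def)
  have "pf (D + E) (\<lambda>x. \<Sum>\<alpha>\<in>exps D. a \<alpha> * (mon \<alpha> x * g x))"
    by (intro pf_sum pf_cmult pf_mon_mult) (use \<open>pf E g\<close> in auto)
  then show ?thesis by (rule pf_cong) (simp add: a sum_distrib_right mult.assoc)
qed

lemma pf_coord: "pf 1 (\<lambda>x. x $ j)"
proof -
  have "(\<lambda>k. if k = j then 1 else 0) \<in> exps 1" by (simp add: exps_def)
  moreover have "mon (\<lambda>k. if k = j then 1 else 0) x = x $ j" for x
  proof -
    have "(x$k)^(if k = j then 1 else 0) = (if k = j then x$k else 1)" for k by simp
    then show ?thesis by (simp add: mon_def)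
  qed
  ultimately show ?thesis using pf_mon[of "\<lambda>k. if k = j then 1 else 0" 1] by (simp add: pf_cong)
qed

lemma pf_pow: "pf D f \<Longrightarrow> pf (D * k) (\<lambda>x. f x ^ k)"
proof (induction k)
  case 0 then show ?case using pf_const[of 0 1] by simp
next
  case (Suc k)
  then have "pf (D + D * k) (\<lambda>x. f x * f x ^ k)" using pf_mult by blast
  then show ?case by (simp add: pf_cong)
qed

lemma pf_prod: "finite I \<Longrightarrow> (\<And>i. i \<in> I \<Longrightarrow> pf (D i) (f i)) \<Longrightarrow> pf (\<Sum>i\<in>I. D i) (\<lambda>x. \<Prod>i\<in>I. f i x)"
proof (induction I rule: finite_induct)
  case empty then show ?case using pf_const[of 0 1] by simp
next
  case (insert i I) then show ?case using pf_mult[of "D i" "f i" "\<Sum>i\<in>I. D i" "\<lambda>x. \<Prod>i\<in>I. f i x"] by simp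
qed

lemma pf_upoly: "degree p \<le> D \<Longrightarrow> pf D (\<lambda>x. poly p (x $ j))"
proof -
  assume "degree p \<le> D"
  have "pf D (\<lambda>x. \<Sum>i\<le>degree p. coeff p i * (x $ j) ^ i)"
  proof (intro pf_sum pf_cmult)
    fix i assume "i \<in> {..degree p}"
    then have "pf (1 * i) (\<lambda>x. (x $ j) ^ i)" using pf_pow[OF pf_coord] by blast
    then show "pf D (\<lambda>x. (x $ j) ^ i)" using \<open>i \<in> _\<close> \<open>degree p \<le> D\<close> by (auto intro: pf_mono)
  qed simp
  then show ?thesis by (simp add: poly_altdef pf_cong)
qed

lemma peval_supp: "finite A \<Longrightarrow> {\<alpha>. c \<alpha> \<noteq> 0} \<subseteq> A \<Longrightarrow> peval c x = (\<Sum>\<alpha>\<in>A. c \<alpha> * mon \<alpha> x)"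
  unfolding peval_def by (rule sum.mono_neutral_left) auto

lemma supp_deg: "mpoly_deg_le D c \<Longrightarrow> {\<alpha>. c \<alpha> \<noteq> 0} \<subseteq> exps D"
  by (auto simp: mpoly_deg_le_def)

lemma pf_peval: "mpoly_deg_le D c \<Longrightarrow> pf D (peval c)"
  using peval_supp[of "exps D" c] supp_deg[of D c] pf_sumrep[of "exps D" D c] by (simp add: pf_cong)

lemma pf_to_peval: "pf D f \<Longrightarrow> \<exists>c. mpoly_deg_le D c \<and> is_mpoly c \<and> (\<forall>x. f x = peval c x)"
proof -
  assume "pf D f"
  then obtain a where a: "\<And>x. f x = (\<Sum>\<alpha>\<in>exps D. a \<alpha> * mon \<alpha> x)" by (auto simp: pf_def)
  define c where "c = (\<lambda>\<alpha>. if \<alpha> \<in> exps D then a \<alpha> else 0)"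
  have s: "{\<alpha>. c \<alpha> \<noteq> 0} \<subseteq> exps D" by (auto simp: c_def split: if_splits)
  have "mpoly_deg_le D c" by (auto simp: mpoly_deg_le_def c_def split: if_splits)
  moreover have "is_mpoly c" using s finite_exps by (auto simp: is_mpoly_def intro: finite_subset)
  moreover have "f x = peval c x" for x
    by (simp add: a peval_supp[OF finite_exps s]) (simp add: c_def)
  ultimately show ?thesis by blast
qed

lemma is_mpoly_deg: "is_mpoly c \<Longrightarrow> \<exists>D. mpoly_deg_le D c"
proof -
  assume "is_mpoly c"
  then have f: "finite {\<alpha>. c \<alpha> \<noteq> 0}" by (simp add: is_mpoly_def)
  define D where "D = Max ((\<lambda>\<alpha>. sum \<alpha> UNIV) ` {\<alpha>. c \<alpha> \<noteq> 0})"
  have "mpoly_deg_le D c" unfolding mpoly_deg_le_def exps_def D_def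
    using f by (auto intro: Max_ge)
  then show ?thesis by blast
qed

lemma pf_peval': "is_mpoly c \<Longrightarrow> \<exists>D. pf D (peval c)"
  using is_mpoly_deg pf_peval by blast

lemma upoly_zero:
  fixes c :: "nat \<Rightarrow> real"
  assumes "finite E" "\<And>t. (\<Sum>e\<in>E. c e * t ^ e) = 0" "e \<in> E"
  shows "c e = 0"
proof -
  define p where "p = (\<Sum>e\<in>E. monom (c e) e)"
  have "poly p t = 0" for t using assms(2) by (simp add: p_def poly_sum poly_monom)
  then have "p = 0" using poly_all_0_iff_0 by blast
  then have "coeff p e = 0" by simp
  moreover have "coeff p e = c e" using assms(1,3)
    by (simp add: p_def coeff_sum coeff_monom)
  ultimately show ?thesis by simp
qed

definition vupd :: "real^'n \<Rightarrow> 'n \<Rightarrow> real \<Rightarrow> real^'n" where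
  "vupd x j t = (\<chi> k. if k = j then t else x $ k)"

lemma mon_vupd: "mon \<alpha> (vupd x j t) = t ^ (\<alpha> j) * mon (\<alpha>(j := 0)) x"
proof -
  have "mon \<alpha> (vupd x j t) = (vupd x j t $ j) ^ \<alpha> j * (\<Prod>k\<in>UNIV - {j}. (vupd x j t $ k) ^ \<alpha> k)"
    unfolding mon_def by (subst prod.remove[of _ j]) auto
  also have "(\<Prod>k\<in>UNIV - {j}. (vupd x j t $ k) ^ \<alpha> k) = (\<Prod>k\<in>UNIV - {j}. (x $ k) ^ \<alpha> k)"
    by (rule prod.cong) (auto simp: vupd_def)
  also have "\<dots> = mon (\<alpha>(j := 0)) x"
    unfolding mon_def by (subst prod.remove[of _ j]) (auto intro!: prod.cong)
  finally show ?thesis by (simp add: vupd_def)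
qed

lemma mon_indep_aux:
  fixes V :: "'n::finite set"
  shows "finite V \<Longrightarrow> finite A \<Longrightarrow> (\<forall>\<alpha>\<in>A. \<forall>j. j \<notin> V \<longrightarrow> \<alpha> j = 0) \<Longrightarrow> (\<forall>x. (\<Sum>\<alpha>\<in>A. a \<alpha> * mon \<alpha> x) = 0)
    \<Longrightarrow> \<alpha> \<in> A \<Longrightarrow> a \<alpha> = 0"
proof (induction V arbitrary: A a \<alpha> rule: finite_induct)
  case empty
  then have A: "A \<subseteq> {\<lambda>_. 0}" by auto
  with empty have "\<alpha> = (\<lambda>_. 0)" by auto
  with A empty have "A = {\<lambda>_. 0}" by auto
  with empty show ?case by auto
next
  case (insert j V)
  define E where "E = (\<lambda>\<alpha>. \<alpha> j) ` A"
  have fE: "finite E" using insert by (simp add: E_def)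
  have key: "(\<Sum>\<beta>\<in>{\<beta>\<in>A. \<beta> j = e}. a \<beta> * mon (\<beta>(j := 0)) x) = 0" if "e \<in> E" for e x
  proof (rule upoly_zero[OF fE _ that, where c = "\<lambda>e. \<Sum>\<beta>\<in>{\<beta>\<in>A. \<beta> j = e}. a \<beta> * mon (\<beta>(j := 0)) x"])
    fix t
    have "(\<Sum>e\<in>E. (\<Sum>\<beta>\<in>{\<beta>\<in>A. \<beta> j = e}. a \<beta> * mon (\<beta>(j := 0)) x) * t ^ e)
       = (\<Sum>e\<in>E. (\<Sum>\<beta>\<in>{\<beta>\<in>A. \<beta> j = e}. a \<beta> * mon \<beta> (vupd x j t)))"
      by (intro sum.cong refl) (auto simp: sum_distrib_right mon_vupd intro!: sum.cong)
    also have "\<dots> = (\<Sum>\<beta>\<in>A. a \<beta> * mon \<beta> (vupd x j t))"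
      by (rule sum.group) (use insert in \<open>auto simp: E_def\<close>)
    also have "\<dots> = 0" using insert by blast
    finally show "(\<Sum>e\<in>E. (\<Sum>\<beta>\<in>{\<beta>\<in>A. \<beta> j = e}. a \<beta> * mon (\<beta>(j := 0)) x) * t ^ e) = 0" .
  qed
  define e where "e = \<alpha> j"
  define A' where "A' = (\<lambda>\<beta>. \<beta>(j := 0)) ` {\<beta>\<in>A. \<beta> j = e}"
  have inj: "inj_on (\<lambda>\<beta>. \<beta>(j := 0)) {\<beta>\<in>A. \<beta> j = e}"
  proof (rule inj_onI)
    fix \<beta> \<gamma> assume "\<beta> \<in> {\<beta>\<in>A. \<beta> j = e}" "\<gamma> \<in> {\<beta>\<in>A. \<beta> j = e}" "\<beta>(j := 0) = \<gamma>(j := 0)"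
    then show "\<beta> = \<gamma>" by (metis (mono_tags, lifting) fun_upd_idem_iff fun_upd_upd mem_Collect_eq)
  qed
  have "a ((\<alpha>(j := 0))(j := e)) = 0"
  proof (rule insert.IH[where A = A' and a = "\<lambda>\<beta>. a (\<beta>(j := e))"])
    show "finite A'" using insert by (simp add: A'_def)
    show "\<forall>\<alpha>\<in>A'. \<forall>k. k \<notin> V \<longrightarrow> \<alpha> k = 0" using insert.prems(2) by (auto simp: A'_def)
    show "\<alpha>(j := 0) \<in> A'" using insert.prems(4) by (auto simp: A'_def e_def)
    show "\<forall>x. (\<Sum>\<beta>\<in>A'. a (\<beta>(j := e)) * mon \<beta> x) = 0"
    proof
      fix x
      have "(\<Sum>\<beta>\<in>A'. a (\<beta>(j := e)) * mon \<beta> x) = (\<Sum>\<beta>\<in>{\<beta>\<in>A. \<beta> j = e}. a \<beta> * mon (\<beta>(j := 0)) x)"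
        unfolding A'_def by (subst sum.reindex[OF inj]) (auto intro!: sum.cong)
      also have "\<dots> = 0" using key[of e x] insert.prems(4) by (auto simp: E_def e_def)
      finally show "(\<Sum>\<beta>\<in>A'. a (\<beta>(j := e)) * mon \<beta> x) = 0" .
    qed
  qed
  then show ?case by (simp add: e_def)
qed

lemma mon_indep:
  fixes A :: "('n::finite \<Rightarrow> nat) set"
  shows "finite A \<Longrightarrow> (\<And>x. (\<Sum>\<alpha>\<in>A. a \<alpha> * mon \<alpha> x) = 0) \<Longrightarrow> \<alpha> \<in> A \<Longrightarrow> a \<alpha> = 0"
  using mon_indep_aux[where V = "UNIV::'n set" and A = A and a = a and \<alpha> = \<alpha>] by auto

lemma mon_indep2:
  fixes A :: "('n::finite \<Rightarrow> nat) set"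
  shows "finite A \<Longrightarrow> (\<And>x. (\<Sum>\<alpha>\<in>A. a \<alpha> * mon \<alpha> x) = (\<Sum>\<alpha>\<in>A. b \<alpha> * mon \<alpha> x)) \<Longrightarrow> \<alpha> \<in> A \<Longrightarrow> a \<alpha> = b \<alpha>"
  using mon_indep[of A "\<lambda>\<alpha>. a \<alpha> - b \<alpha>" \<alpha>] by (simp add: left_diff_distrib sum_subtractf)

lemma supp_from_pf:
  assumes "is_mpoly c" "pf D (peval c)"
  shows "{\<alpha>. c \<alpha> \<noteq> 0} \<subseteq> exps D"
proof
  fix \<alpha> assume \<alpha>: "\<alpha> \<in> {\<alpha>. c \<alpha> \<noteq> 0}"
  from assms(2) obtain a where a: "\<And>x. peval c x = (\<Sum>\<alpha>\<in>exps D. a \<alpha> * mon \<alpha> x)" by (auto simp: pf_def)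
  define S where "S = {\<alpha>. c \<alpha> \<noteq> 0} \<union> exps D"
  have fS: "finite S" using assms(1) by (simp add: S_def is_mpoly_def)
  have "(\<Sum>\<beta>\<in>S. c \<beta> * mon \<beta> x) = (\<Sum>\<beta>\<in>S. (if \<beta> \<in> exps D then a \<beta> else 0) * mon \<beta> x)" for x
  proof -
    have "(\<Sum>\<beta>\<in>S. c \<beta> * mon \<beta> x) = peval c x" by (rule peval_supp[symmetric]) (use fS in \<open>auto simp: S_def\<close>)
    also have "\<dots> = (\<Sum>\<beta>\<in>exps D. a \<beta> * mon \<beta> x)" by (rule a)
    also have "\<dots> = (\<Sum>\<beta>\<in>exps D. (if \<beta> \<in> exps D then a \<beta> else 0) * mon \<beta> x)"
      by simp
    also have "\<dots> = (\<Sum>\<beta>\<in>S. (if \<beta> \<in> exps D then a \<beta> else 0) * mon \<beta> x)"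
      by (rule sum.mono_neutral_left) (use fS in \<open>auto simp: S_def\<close>)
    finally show ?thesis .
  qed
  then have "c \<alpha> = (if \<alpha> \<in> exps D then a \<alpha> else 0)"
    by (rule mon_indep2[OF fS]) (use \<alpha> in \<open>auto simp: S_def\<close>)
  with \<alpha> show "\<alpha> \<in> exps D" by (auto split: if_splits)
qed


definition linp :: "('n::finite \<Rightarrow> nat) set \<Rightarrow> (('n \<Rightarrow> nat) \<Rightarrow> real) \<Rightarrow> real^'n \<Rightarrow> real^'n \<Rightarrow> real poly" where
  "linp A a x v = (\<Sum>\<alpha>\<in>A. smult (a \<alpha>) (\<Prod>j\<in>UNIV. [:x$j, v$j:] ^ \<alpha> j))"

lemma poly_linp: "poly (linp A a x v) s = (\<Sum>\<alpha>\<in>A. a \<alpha> * mon \<alpha> (x + s *\<^sub>R v))"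
  by (simp add: linp_def poly_sum poly_prod mon_def algebra_simps)

lemma degree_linp:
  assumes "finite A" "A \<subseteq> exps D"
  shows "degree (linp A a x v) \<le> D"
  unfolding linp_def
proof (rule degree_sum_le[OF assms(1)])
  fix \<alpha> assume "\<alpha> \<in> A"
  have "degree (\<Prod>j\<in>UNIV. [:x$j, v$j:] ^ \<alpha> j) \<le> (\<Sum>j\<in>UNIV. degree ([:x$j, v$j:] ^ \<alpha> j))"
    using degree_prod_sum_le[of UNIV "\<lambda>j. [:x$j, v$j:] ^ \<alpha> j"] by (simp add: o_def)
  also have "\<dots> \<le> (\<Sum>j\<in>UNIV. \<alpha> j)"
  proof (rule sum_mono)
    fix j
    have "degree ([:x$j, v$j:] ^ \<alpha> j) \<le> degree [:x$j, v$j:] * \<alpha> j" by (rule degree_power_le)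
    also have "\<dots> \<le> 1 * \<alpha> j" by (intro mult_right_mono) auto
    finally show "degree ([:x$j, v$j:] ^ \<alpha> j) \<le> \<alpha> j" by simp
  qed
  also have "\<dots> \<le> D" using assms \<open>\<alpha> \<in> A\<close> by (auto simp: exps_def)
  finally show "degree (smult (a \<alpha>) (\<Prod>j\<in>UNIV. [:x$j, v$j:] ^ \<alpha> j)) \<le> D"
    using degree_smult_le order_trans by blast
qed

lemma pf_line_poly:
  assumes "pf D f"
  shows "\<exists>p. degree p \<le> D \<and> (\<forall>s. poly p s = f (x + s *\<^sub>R v))"
proof -
  from assms obtain a where a: "\<And>x. f x = (\<Sum>\<alpha>\<in>exps D. a \<alpha> * mon \<alpha> x)" by (auto simp: pf_def)
  show ?thesis
    by (rule exI[of _ "linp (exps D) a x v"]) (simp add: degree_linp poly_linp a)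
qed

lemma peval_line_poly: "is_mpoly c \<Longrightarrow> poly (linp {\<alpha>. c \<alpha> \<noteq> 0} c x v) s = peval c (x + s *\<^sub>R v)"
  by (simp add: poly_linp peval_def)

definition ppf :: "nat \<Rightarrow> (real^'n::finite \<Rightarrow> real poly) \<Rightarrow> bool" where
  "ppf D G \<longleftrightarrow> (\<forall>i. pf D (\<lambda>x. coeff (G x) i))"

lemma ppf_mono: "ppf D G \<Longrightarrow> D \<le> E \<Longrightarrow> ppf E G"
  by (auto simp: ppf_def intro: pf_mono)

lemma ppf_add: "ppf D G \<Longrightarrow> ppf D H \<Longrightarrow> ppf D (\<lambda>x. G x + H x)"
  by (auto simp: ppf_def intro: pf_add)

lemma ppf_sum: "finite I \<Longrightarrow> (\<And>i. i \<in> I \<Longrightarrow> ppf D (G i)) \<Longrightarrow> ppf D (\<lambda>x. \<Sum>i\<in>I. G i x)"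
  by (auto simp: ppf_def coeff_sum intro!: pf_sum)

lemma ppf_mult: "ppf D G \<Longrightarrow> ppf E H \<Longrightarrow> ppf (D + E) (\<lambda>x. G x * H x)"
  by (auto simp: ppf_def coeff_mult intro!: pf_sum pf_mult)

lemma ppf_smult: "pf D c \<Longrightarrow> ppf E G \<Longrightarrow> ppf (D + E) (\<lambda>x. smult (c x) (G x))"
  by (auto simp: ppf_def intro!: pf_mult)

lemma ppf_const: "ppf D (\<lambda>x. p)"
  by (auto simp: ppf_def intro: pf_const)

lemma ppf_pow: "ppf D G \<Longrightarrow> ppf (D * k) (\<lambda>x. G x ^ k)"
proof (induction k)
  case 0 then show ?case by (simp add: ppf_const)
next
  case (Suc k)
  then have "ppf (D + D * k) (\<lambda>x. G x * G x ^ k)" using ppf_mult by blast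
  then show ?case by simp
qed

lemma ppf_prod: "finite I \<Longrightarrow> (\<And>i. i \<in> I \<Longrightarrow> ppf (D i) (G i)) \<Longrightarrow> ppf (\<Sum>i\<in>I. D i) (\<lambda>x. \<Prod>i\<in>I. G i x)"
proof (induction I rule: finite_induct)
  case empty then show ?case by (simp add: ppf_const)
next
  case (insert i I) then show ?case using ppf_mult[of "D i" "G i" "\<Sum>i\<in>I. D i" "\<lambda>x. \<Prod>i\<in>I. G i x"] by simp
qed

lemma coeff_lin2: "coeff [:a, b:] i = (if i = 0 then a else if i = 1 then b else 0)"
  by (cases i) (auto simp: coeff_pCons split: nat.splits)

lemma pf_coord': "pf (Suc 0) (\<lambda>x. x $ j)" using pf_coord by simp

lemma ppf_lin: "ppf 1 (\<lambda>x. [:y$j, x$j - y$j:])"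
  unfolding ppf_def
proof
  fix i
  show "pf 1 (\<lambda>x. coeff [:y $ j, x $ j - y $ j:] i)"
    by (cases "i = 0"; cases "i = 1") (auto simp: coeff_lin2 intro!: pf_const pf_diff pf_coord pf_coord')
qed

lemma ppf_linp:
  assumes "finite A" "A \<subseteq> exps D"
  shows "ppf D (\<lambda>x. linp A a y (x - y))"
proof -
  have "ppf D (\<lambda>x. \<Sum>\<alpha>\<in>A. smult (a \<alpha>) (\<Prod>j\<in>UNIV. [:y$j, (x - y)$j:] ^ \<alpha> j))"
  proof (intro ppf_sum)
    fix \<alpha> assume "\<alpha> \<in> A"
    have "ppf (\<Sum>j\<in>UNIV. 1 * \<alpha> j) (\<lambda>x. \<Prod>j\<in>UNIV. [:y$j, x$j - y$j:] ^ \<alpha> j)"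
      by (intro ppf_prod ppf_pow ppf_lin) auto
    then have "ppf D (\<lambda>x. \<Prod>j\<in>UNIV. [:y$j, x$j - y$j:] ^ \<alpha> j)"
      by (rule ppf_mono) (use assms \<open>\<alpha> \<in> A\<close> in \<open>auto simp: exps_def\<close>)
    then have "ppf (0 + D) (\<lambda>x. smult (a \<alpha>) (\<Prod>j\<in>UNIV. [:y$j, x$j - y$j:] ^ \<alpha> j))"
      by (intro ppf_smult pf_const)
    then show "ppf D (\<lambda>x. smult (a \<alpha>) (\<Prod>j\<in>UNIV. [:y$j, (x - y)$j:] ^ \<alpha> j))" by simp
  qed (use assms in auto)
  then show ?thesis by (simp add: linp_def)
qed

lemma is_mpoly_pdiff:
  assumes "is_mpoly c" shows "is_mpoly (pdiff k c)"
proof -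
  have sub: "{\<beta>. pdiff k c \<beta> \<noteq> 0} \<subseteq> (\<lambda>\<alpha>. \<alpha>(k := \<alpha> k - 1)) ` {\<alpha>. c \<alpha> \<noteq> 0}"
  proof
    fix \<beta> assume "\<beta> \<in> {\<beta>. pdiff k c \<beta> \<noteq> 0}"
    then have "c (\<beta>(k := \<beta> k + 1)) \<noteq> 0" by (simp add: pdiff_def)
    moreover have "\<beta> = (\<beta>(k := \<beta> k + 1))(k := (\<beta>(k := \<beta> k + 1)) k - 1)" by simp
    ultimately show "\<beta> \<in> (\<lambda>\<alpha>. \<alpha>(k := \<alpha> k - 1)) ` {\<alpha>. c \<alpha> \<noteq> 0}" by blast
  qed
  show ?thesis using finite_surj[OF _ sub] assms unfolding is_mpoly_def by blast
qed

lemma mon_remove: "mon \<alpha> z = (z$k) ^ \<alpha> k * (\<Prod>j\<in>UNIV - {k}. (z$j) ^ \<alpha> j)"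
  unfolding mon_def by (subst prod.remove[of _ k]) auto

lemma mon_dec: "mon (\<alpha>(k := \<alpha> k - 1)) z = (z$k) ^ (\<alpha> k - 1) * (\<Prod>j\<in>UNIV - {k}. (z$j) ^ \<alpha> j)"
  by (subst mon_remove[of _ _ k]) (auto intro!: prod.cong)

lemma mon_line_deriv:
  "((\<lambda>s. mon \<alpha> (y + s *\<^sub>R v)) has_real_derivative
     (\<Sum>k\<in>UNIV. v$k * (real (\<alpha> k) * mon (\<alpha>(k := \<alpha> k - 1)) (y + s *\<^sub>R v)))) (at s)"
proof -
  have d: "((\<lambda>s. (y$j + s * v$j) ^ \<alpha> j) has_real_derivative
       real (\<alpha> j) * (v$j * (y$j + s * v$j) ^ (\<alpha> j - Suc 0))) (at s)" for j
    by (rule DERIV_power) (auto intro!: derivative_eq_intros)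
  have "((\<lambda>s. \<Prod>j\<in>UNIV. (y$j + s * v$j) ^ \<alpha> j) has_real_derivative
     (\<Sum>k\<in>UNIV. real (\<alpha> k) * (v$k * (y$k + s * v$k) ^ (\<alpha> k - Suc 0)) * (\<Prod>j\<in>UNIV - {k}. (y$j + s * v$j) ^ \<alpha> j))) (at s)"
    by (rule has_field_derivative_prod) (rule d)
  moreover have "(\<lambda>s. mon \<alpha> (y + s *\<^sub>R v)) = (\<lambda>s. \<Prod>j\<in>UNIV. (y$j + s * v$j) ^ \<alpha> j)"
    by (simp add: mon_def)
  moreover have "(\<Sum>k\<in>UNIV. real (\<alpha> k) * (v$k * (y$k + s * v$k) ^ (\<alpha> k - Suc 0)) * (\<Prod>j\<in>UNIV - {k}. (y$j + s * v$j) ^ \<alpha> j))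
      = (\<Sum>k\<in>UNIV. v$k * (real (\<alpha> k) * mon (\<alpha>(k := \<alpha> k - 1)) (y + s *\<^sub>R v)))"
  proof (intro sum.cong refl)
    fix k
    have "(y$k + s * v$k)^(\<alpha> k - Suc 0) * (\<Prod> j\<in>UNIV-{k}. (y$j + s * v$j)^\<alpha> j) = mon (\<alpha>(k := \<alpha> k - 1)) (y + s *\<^sub>R v)"
      using mon_dec[of \<alpha> k "y + s *\<^sub>R v"] by simp
    then show "real (\<alpha> k) * (v$k * (y$k + s * v$k) ^ (\<alpha> k - Suc 0)) * (\<Prod>j\<in>UNIV - {k}. (y$j + s * v$j) ^ \<alpha> j)
      = v$k * (real (\<alpha> k) * mon (\<alpha>(k := \<alpha> k - 1)) (y + s *\<^sub>R v))"
      by (simp add: mult_ac)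
  qed
  ultimately show ?thesis by simp
qed

lemma peval_pdiff_alt:
  assumes "is_mpoly c"
  shows "(\<Sum>\<alpha>\<in>{\<alpha>. c \<alpha> \<noteq> 0}. c \<alpha> * (real (\<alpha> k) * mon (\<alpha>(k := \<alpha> k - 1)) z)) = peval (pdiff k c) z"
proof -
  let ?S = "{\<alpha>. c \<alpha> \<noteq> 0}" and ?S1 = "{\<alpha>. c \<alpha> \<noteq> 0 \<and> \<alpha> k \<noteq> 0}" and ?T = "{\<beta>. pdiff k c \<beta> \<noteq> 0}"
  have fS: "finite ?S" using assms by (simp add: is_mpoly_def)
  have "(\<Sum>\<alpha>\<in>?S. c \<alpha> * (real (\<alpha> k) * mon (\<alpha>(k := \<alpha> k - 1)) z)) = (\<Sum>\<alpha>\<in>?S1. c \<alpha> * (real (\<alpha> k) * mon (\<alpha>(k := \<alpha> k - 1)) z))"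
    by (rule sum.mono_neutral_right) (use fS in auto)
  also have "\<dots> = (\<Sum>\<beta>\<in>?T. pdiff k c \<beta> * mon \<beta> z)"
  proof (rule sum.reindex_bij_witness[where i = "\<lambda>\<beta>. \<beta>(k := \<beta> k + 1)" and j = "\<lambda>\<alpha>. \<alpha>(k := \<alpha> k - 1)"])
    fix \<alpha> assume a: "\<alpha> \<in> ?S1"
    then show "(\<alpha>(k := \<alpha> k - 1))(k := (\<alpha>(k := \<alpha> k - 1)) k + 1) = \<alpha>" by auto
    from a show "\<alpha>(k := \<alpha> k - 1) \<in> ?T"
      by (auto simp: pdiff_def)
    from a show "pdiff k c (\<alpha>(k := \<alpha> k - 1)) * mon (\<alpha>(k := \<alpha> k - 1)) z = c \<alpha> * (real (\<alpha> k) * mon (\<alpha>(k := \<alpha> k - 1)) z)"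
      by (auto simp: pdiff_def of_nat_diff)
  next
    fix \<beta> assume b: "\<beta> \<in> ?T"
    then show "(\<beta>(k := \<beta> k + 1))(k := (\<beta>(k := \<beta> k + 1)) k - 1) = \<beta>" by auto
    from b show "\<beta>(k := \<beta> k + 1) \<in> ?S1" by (auto simp: pdiff_def)
  qed
  also have "\<dots> = peval (pdiff k c) z" by (simp add: peval_def)
  finally show ?thesis .
qed

lemma peval_line_deriv:
  assumes "is_mpoly c"
  shows "((\<lambda>s. peval c (y + s *\<^sub>R v)) has_real_derivative
     (\<Sum>k\<in>UNIV. v$k * peval (pdiff k c) (y + s *\<^sub>R v))) (at s)"
proof -
  let ?S = "{\<alpha>. c \<alpha> \<noteq> 0}"
  have "((\<lambda>s. \<Sum>\<alpha>\<in>?S. c \<alpha> * mon \<alpha> (y + s *\<^sub>R v)) has_real_derivative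
     (\<Sum>\<alpha>\<in>?S. c \<alpha> * (\<Sum>k\<in>UNIV. v$k * (real (\<alpha> k) * mon (\<alpha>(k := \<alpha> k - 1)) (y + s *\<^sub>R v))))) (at s)"
    by (intro DERIV_sum DERIV_cmult mon_line_deriv)
  moreover have "(\<Sum>\<alpha>\<in>?S. c \<alpha> * (\<Sum>k\<in>UNIV. v$k * (real (\<alpha> k) * mon (\<alpha>(k := \<alpha> k - 1)) (y + s *\<^sub>R v))))
     = (\<Sum>k\<in>UNIV. v$k * peval (pdiff k c) (y + s *\<^sub>R v))"
    by (simp add: sum_distrib_left peval_pdiff_alt[OF assms, symmetric] mult_ac sum.swap[of _ ?S])
  ultimately show ?thesis by (simp add: peval_def)
qed

lemma pf_continuous: "pf D f \<Longrightarrow> continuous_on UNIV f"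
proof -
  assume "pf D f"
  then obtain a where a: "\<And>x. f x = (\<Sum>\<alpha>\<in>exps D. a \<alpha> * mon \<alpha> x)" by (auto simp: pf_def)
  have "continuous_on UNIV (\<lambda>x::real^'a. \<Sum>\<alpha>\<in>exps D. a \<alpha> * (\<Prod>j\<in>UNIV. (x$j) ^ \<alpha> j))"
    by (intro continuous_intros)
  moreover have "f = (\<lambda>x::real^'a. \<Sum>\<alpha>\<in>exps D. a \<alpha> * (\<Prod>j\<in>UNIV. (x$j) ^ \<alpha> j))"
    by (simp add: a mon_def fun_eq_iff)
  ultimately show ?thesis by simp
qed


definition sosU :: "nat \<Rightarrow> real poly \<Rightarrow> bool" where
  "sosU d p \<longleftrightarrow> (\<exists>(I::nat set) q. finite I \<and> (\<forall>i\<in>I. degree (q i) \<le> d) \<and> p = (\<Sum>i\<in>I. (q i)^2))"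

lemma sosU_sos_upoly: "sosU d p \<Longrightarrow> sos_upoly d p"
proof -
  assume "sosU d p"
  then obtain I :: "nat set" and q where I: "finite I" "\<forall>i\<in>I. degree (q i) \<le> d" "p = (\<Sum>i\<in>I. (q i)^2)"
    unfolding sosU_def by blast
  from ex_bij_betw_nat_finite[OF I(1)] obtain h where h: "bij_betw h {0..<card I} I" by blast
  have "(\<Sum>k\<in>{0..<card I}. (q (h k))^2) = (\<Sum>i\<in>I. (q i)^2)"
    by (rule sum.reindex_bij_betw[OF h])
  then have e: "p = (\<Sum>k<card I. (q (h k))^2)" using I(3) by (simp add: atLeast0LessThan)
  have "\<forall>k<card I. degree (q (h k)) \<le> d" using h I(2) by (auto simp: bij_betw_def)
  with e show ?thesis unfolding sos_upoly_def
    by (intro exI[of _ "card I"] exI[of _ "\<lambda>k. q (h k)"]) simp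
qed

lemma sosU_mono: "sosU d p \<Longrightarrow> d \<le> e \<Longrightarrow> sosU e p"
proof -
  assume "sosU d p" "d \<le> e"
  then obtain I :: "nat set" and q where I: "finite I" "\<forall>i\<in>I. degree (q i) \<le> d" "p = (\<Sum>i\<in>I. (q i)^2)"
    unfolding sosU_def by blast
  then show ?thesis using \<open>d \<le> e\<close> unfolding sosU_def by (intro exI[of _ I] exI[of _ q]) auto
qed

lemma sosU_const: "c \<ge> 0 \<Longrightarrow> sosU 0 [:c:]"
  unfolding sosU_def
  by (intro exI[of _ "{0}"] exI[of _ "\<lambda>_. [:sqrt c:]"]) (auto simp: power2_eq_square)

lemma sosU_add:
  assumes "sosU d p" "sosU d q" shows "sosU d (p + q)"
proof -
  from assms(1) obtain I :: "nat set" and a where I: "finite I" "\<forall>i\<in>I. degree (a i) \<le> d" "p = (\<Sum>i\<in>I. (a i)^2)"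
    unfolding sosU_def by blast
  from assms(2) obtain J :: "nat set" and b where J: "finite J" "\<forall>i\<in>J. degree (b i) \<le> d" "q = (\<Sum>i\<in>J. (b i)^2)"
    unfolding sosU_def by blast
  define K where "K = (\<lambda>i. 2 * i) ` I \<union> (\<lambda>i. 2 * i + 1) ` J"
  define c where "c = (\<lambda>k::nat. if even k then a (k div 2) else b (k div 2))"
  have "2 * i \<noteq> 2 * j + (1::nat)" for i j by presburger
  then have disj: "(\<lambda>i. 2 * i) ` I \<inter> (\<lambda>i. 2 * i + 1) ` J = {}" by blast
  have "(\<Sum>k\<in>K. (c k)^2) = (\<Sum>k\<in>(\<lambda>i. 2 * i) ` I. (c k)^2) + (\<Sum>k\<in>(\<lambda>i. 2 * i + 1) ` J. (c k)^2)"
    unfolding K_def by (rule sum.union_disjoint) (use I J disj in auto)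
  also have "(\<Sum>k\<in>(\<lambda>i. 2 * i) ` I. (c k)^2) = p"
    by (subst sum.reindex) (auto simp: inj_on_def c_def I(3))
  also have "(\<Sum>k\<in>(\<lambda>i. 2 * i + 1) ` J. (c k)^2) = q"
    by (subst sum.reindex) (auto simp: inj_on_def c_def J(3))
  finally have "p + q = (\<Sum>k\<in>K. (c k)^2)" by simp
  moreover have "finite K" using I J by (simp add: K_def)
  moreover have "\<forall>k\<in>K. degree (c k) \<le> d" using I J by (auto simp: K_def c_def)
  ultimately show ?thesis unfolding sosU_def by (intro exI[of _ K] exI[of _ c]) simp
qed

lemma sosU_mult_sq:
  assumes "sosU d p" "degree l \<le> e" shows "sosU (d + e) (l^2 * p)"
proof -
  from assms(1) obtain I :: "nat set" and a where I: "finite I" "\<forall>i\<in>I. degree (a i) \<le> d" "p = (\<Sum>i\<in>I. (a i)^2)"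
    unfolding sosU_def by blast
  have "l^2 * p = (\<Sum>i\<in>I. (l * a i)^2)" by (simp add: I(3) sum_distrib_left power_mult_distrib)
  moreover have "\<forall>i\<in>I. degree (l * a i) \<le> d + e"
  proof
    fix i assume "i \<in> I"
    have "degree (l * a i) \<le> degree l + degree (a i)" by (rule degree_mult_le)
    then show "degree (l * a i) \<le> d + e" using I(2) \<open>i \<in> I\<close> assms(2) by fastforce
  qed
  ultimately show ?thesis using I(1) unfolding sosU_def by (intro exI[of _ I] exI[of _ "\<lambda>i. l * a i"]) simp
qed

lemma double_root:
  fixes p :: "real poly"
  assumes "poly p a = 0" "poly (pderiv p) a = 0"
  shows "\<exists>q. p = [:-a, 1:]^2 * q"
proof -
  from assms(1) obtain q1 where q1: "p = [:-a, 1:] * q1" using poly_eq_0_iff_dvd by blast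
  have "pderiv p = [:-a, 1:] * pderiv q1 + q1 * pderiv [:-a, 1:]" by (simp only: q1 pderiv_mult)
  then have "poly (pderiv p) a = poly q1 a" by (simp add: pderiv_pCons)
  then have "poly q1 a = 0" using assms(2) by simp
  then obtain q2 where "q1 = [:-a, 1:] * q2" using poly_eq_0_iff_dvd by blast
  then show ?thesis using q1 by (metis power2_eq_square mult.assoc)
qed


lemma poly_bounded_const:
  fixes p :: "real poly"
  assumes "\<And>s. s \<ge> 0 \<Longrightarrow> \<bar>poly p s\<bar> \<le> B"
  shows "poly p s = poly p t"
proof (cases "degree p = 0")
  case True
  then obtain c where "p = [:c:]" by (meson degree_eq_zeroE)
  then show ?thesis by simp
next
  case False
  obtain a q where pq: "p = pCons a q" by (cases p) auto
  have "q \<noteq> 0" using False pq by auto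
  from poly_infinity[OF this, of "B + 1" a] obtain r where r: "\<And>z::real. r \<le> norm z \<Longrightarrow> B + 1 \<le> norm (poly (pCons a q) z)" by blast
  have "B + 1 \<le> \<bar>poly p \<bar>r\<bar>\<bar>" using r[of "\<bar>r\<bar>"] pq by simp
  moreover have "\<bar>poly p \<bar>r\<bar>\<bar> \<le> B" using assms[of "\<bar>r\<bar>"] by simp
  ultimately show ?thesis by simp
qed

lemma poly_nonneg_min:
  fixes p :: "real poly"
  assumes "\<And>x. poly p x \<ge> 0"
  shows "\<exists>a. \<forall>x. poly p a \<le> poly p x"
proof (cases "degree p = 0")
  case True
  then obtain c where "p = [:c:]" by (meson degree_eq_zeroE)
  then show ?thesis by simp
next
  case False
  obtain a0 q where pq: "p = pCons a0 q" by (cases p) auto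
  have "q \<noteq> 0" using False pq by auto
  from poly_infinity[OF this, of "poly p 0 + 1" a0] obtain r where
    r: "\<And>z::real. r \<le> norm z \<Longrightarrow> poly p 0 + 1 \<le> norm (poly (pCons a0 q) z)" by blast
  have c1: "compact {-\<bar>r\<bar>..\<bar>r\<bar>}" by simp
  have c2: "{-\<bar>r\<bar>..\<bar>r\<bar>} \<noteq> {}" by simp
  have c3: "continuous_on {-\<bar>r\<bar>..\<bar>r\<bar>} (poly p)" by (rule continuous_on_poly) (rule continuous_on_id)
  from continuous_attains_inf[OF c1 c2 c3] obtain a where a: "a \<in> {-\<bar>r\<bar>..\<bar>r\<bar>}" "\<And>x. x \<in> {-\<bar>r\<bar>..\<bar>r\<bar>} \<Longrightarrow> poly p a \<le> poly p x"
    by blast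
  have "poly p a \<le> poly p x" for x
  proof (cases "x \<in> {-\<bar>r\<bar>..\<bar>r\<bar>}")
    case True then show ?thesis using a by blast
  next
    case False
    then have "r \<le> norm x" by auto
    then have "poly p 0 + 1 \<le> \<bar>poly p x\<bar>" using r pq by simp
    moreover have "poly p a \<le> poly p 0" using a(2)[of 0] by simp
    ultimately show ?thesis using assms[of x] by simp
  qed
  then show ?thesis by blast
qed

lemma nonneg_sosU:
  fixes p :: "real poly"
  shows "(\<And>x. poly p x \<ge> 0) \<Longrightarrow> sosU (degree p div 2) p"
proof (induction "degree p" arbitrary: p rule: less_induct)
  case less
  show ?case
  proof (cases "degree p = 0")
    case True
    then obtain c where c: "p = [:c:]" by (meson degree_eq_zeroE)
    then have "c \<ge> 0" using less.prems[of 0] by simp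
    then show ?thesis using c sosU_const True by simp
  next
    case False
    from poly_nonneg_min[OF less.prems] obtain a where a: "\<And>x. poly p a \<le> poly p x" by blast
    define c where "c = poly p a"
    define p1 where "p1 = p - [:c:]"
    have p1a: "poly p1 a = 0" by (simp add: p1_def c_def)
    have p1nn: "poly p1 x \<ge> 0" for x using a[of x] by (simp add: p1_def c_def)
    have "p1 = p + [:-c:]" by (simp add: p1_def)
    then have dp1: "degree p1 = degree p" using False degree_add_eq_left[of "[:-c:]" p] by simp
    have "poly (pderiv p1) a = 0"
      using DERIV_local_min[OF poly_DERIV[of p1 a], of 1] p1a p1nn by auto
    from double_root[OF p1a this] obtain q where q: "p1 = [:-a, 1:]^2 * q" by blast
    have "p1 \<noteq> 0" using dp1 False by auto
    then have "q \<noteq> 0" using q by auto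
    have dq: "degree p1 = 2 + degree q"
      using q \<open>q \<noteq> 0\<close> by (simp add: degree_mult_eq degree_power_eq)
    have qnn_ne: "poly q x \<ge> 0" if "x \<noteq> a" for x
    proof -
      have "0 \<le> poly p1 x" by (rule p1nn)
      also have "poly p1 x = (x - a)^2 * poly q x" by (simp add: q)
      finally show ?thesis using that by (simp add: zero_le_mult_iff)
    qed
    have qnn: "poly q x \<ge> 0" for x
    proof (cases "x = a")
      case False then show ?thesis by (rule qnn_ne)
    next
      case True
      have "(\<lambda>n. poly q (a + inverse (real (Suc n)))) \<longlonglongrightarrow> poly q (a + 0)"
        by (intro tendsto_poly tendsto_add tendsto_const LIMSEQ_inverse_real_of_nat)
      moreover have "\<forall>n. 0 \<le> poly q (a + inverse (real (Suc n)))"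
        by (intro allI qnn_ne) simp
      ultimately show ?thesis using True by (simp add: LIMSEQ_le_const)
    qed
    have "degree q < degree p" using dq dp1 by simp
    from less.hyps[OF this qnn] have "sosU (degree q div 2) q" .
    then have "sosU (degree q div 2 + 1) ([:-a, 1:]^2 * q)" by (rule sosU_mult_sq) simp
    moreover have "degree q div 2 + 1 = degree p div 2" using dq dp1 by presburger
    ultimately have s1: "sosU (degree p div 2) p1" using q by simp
    have "c \<ge> 0" using less.prems by (simp add: c_def)
    then have "sosU (degree p div 2) [:c:]" using sosU_const sosU_mono by blast
    from sosU_add[OF s1 this] show ?thesis by (simp add: p1_def)
  qed
qed


definition QF :: "nat \<Rightarrow> (nat \<Rightarrow> nat \<Rightarrow> real) \<Rightarrow> (nat \<Rightarrow> real) \<Rightarrow> real" where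
  "QF N W z = (\<Sum>a<N. \<Sum>b<N. z a * W a b * z b)"

lemma QF_cong: "(\<And>a. a < N \<Longrightarrow> z a = z' a) \<Longrightarrow> QF N W z = QF N W z'"
  unfolding QF_def by (intro sum.cong refl) auto

lemma QF_Suc:
  assumes "\<And>a b. W a b = W b a"
  shows "QF (Suc N) W z = QF N W z + 2 * z N * (\<Sum>a<N. W a N * z a) + W N N * (z N)^2"
proof -
  have "QF (Suc N) W z = (\<Sum>a<N. (\<Sum>b<N. z a * W a b * z b) + z a * W a N * z N) + ((\<Sum>b<N. z N * W N b * z b) + z N * W N N * z N)"
    by (simp add: QF_def)
  also have "\<dots> = QF N W z + (\<Sum>a<N. z a * W a N * z N) + (\<Sum>b<N. z N * W N b * z b) + z N * W N N * z N"
    by (simp add: QF_def sum.distrib)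
  also have "(\<Sum>b<N. z N * W N b * z b) = z N * (\<Sum>a<N. W a N * z a)"
    using assms by (simp add: sum_distrib_left mult_ac)
  also have "(\<Sum>a<N. z a * W a N * z N) = z N * (\<Sum>a<N. W a N * z a)"
    by (simp add: sum_distrib_left mult_ac)
  finally show ?thesis by (simp add: power2_eq_square algebra_simps)
qed

lemma QF_zero: "QF N W (\<lambda>_. 0) = 0" by (simp add: QF_def)

lemma sum_ind_r: "finite S \<Longrightarrow> (\<Sum>b\<in>S. X b * (if b = a then 1 else 0)) = (if a \<in> S then X a else (0::real))"
proof -
  assume "finite S"
  have "(\<Sum>b\<in>S. X b * (if b = a then 1 else 0)) = (\<Sum>b\<in>S. if b = a then X b else 0)"
    by (intro sum.cong) auto
  then show ?thesis using \<open>finite S\<close> by (simp add: sum.delta')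
qed

lemma sum_ind_l: "finite S \<Longrightarrow> (\<Sum>b\<in>S. (if b = a then 1 else 0) * X b) = (if a \<in> S then X a else (0::real))"
  using sum_ind_r[of S X a] by (simp add: mult.commute)

lemma QF_unit: "a < N \<Longrightarrow> QF N W (\<lambda>i. if i = a then 1 else 0) = W a a"
proof -
  assume "a < N"
  have "QF N W (\<lambda>i. if i = a then 1 else 0) = (\<Sum>a'<N. (if a' = a then 1 else 0) * (\<Sum>b<N. W a' b * (if b = a then 1 else 0)))"
    by (simp add: QF_def sum_distrib_left mult_ac)
  also have "\<dots> = W a a" using \<open>a < N\<close> by (simp add: sum_ind_r sum_ind_l)
  finally show ?thesis .
qed

lemma QF_sub:
  "QF N (\<lambda>a b. W a b - W a N * W b N / c) z = QF N W z - (\<Sum>a<N. W a N * z a)^2 / c"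
proof -
  have "QF N (\<lambda>a b. W a b - W a N * W b N / c) z = QF N W z - (\<Sum>a<N. \<Sum>b<N. z a * (W a N * W b N / c) * z b)"
    by (simp add: QF_def algebra_simps sum_subtractf)
  also have "(\<Sum>a<N. \<Sum>b<N. z a * (W a N * W b N / c) * z b) = (\<Sum>a<N. W a N * z a) * (\<Sum>b<N. W b N * z b) / c"
    by (simp add: sum_product sum_divide_distrib mult_ac)
  finally show ?thesis by (simp add: power2_eq_square)
qed

lemma psd_factor:
  "(\<And>a b. W a b = W b a) \<Longrightarrow> (\<And>z. 0 \<le> QF N W z) \<Longrightarrow> \<exists>B. \<forall>z. QF N W z = (\<Sum>k<N. (\<Sum>a<N. B k a * z a)^2)"
proof (induction N arbitrary: W)
  case 0 then show ?case by (simp add: QF_def)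
next
  case (Suc N)
  note sym = Suc.prems(1)
  define c where "c = W N N"
  have "0 \<le> QF (Suc N) W (\<lambda>i. if i = N then 1 else 0)" by (rule Suc.prems(2))
  also have "QF (Suc N) W (\<lambda>i. if i = N then 1 else 0) = c"
    by (simp add: QF_Suc[OF sym] c_def QF_cong[of N "\<lambda>i. if i = N then 1 else 0" "\<lambda>_. 0"] QF_zero)
  finally have c0: "0 \<le> c" .
  show ?case
  proof (cases "c = 0")
    case False
    then have cpos: "c > 0" using c0 by simp
    define W' where "W' = (\<lambda>a b. W a b - W a N * W b N / c)"
    have sym': "W' a b = W' b a" for a b using sym by (simp add: W'_def mult.commute)
    have psd': "0 \<le> QF N W' z" for z
    proof -
      define s where "s = (\<Sum>a<N. W a N * z a)"
      define z' where "z' = z(N := - s / c)"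
      have nn: "0 \<le> QF (Suc N) W z'" by (rule Suc.prems(2))
      have q1: "QF N W z' = QF N W z" by (rule QF_cong) (simp add: z'_def)
      have q2: "(\<Sum>a<N. W a N * z' a) = s" by (simp add: z'_def s_def)
      have q3: "z' N = - s / c" by (simp add: z'_def)
      have "QF (Suc N) W z' = QF N W z + 2 * (- s / c) * s + c * (s / c)^2"
        unfolding QF_Suc[OF sym] q1 q2 q3 by (simp add: c_def power2_eq_square)
      also have "\<dots> = QF N W z - s^2 / c"
        using cpos by (simp add: power2_eq_square field_simps)
      also have "\<dots> = QF N W' z" by (simp add: W'_def QF_sub s_def c_def)
      finally show ?thesis using nn by simp
    qed
    from Suc.IH[OF sym' psd'] obtain B' where B': "\<And>z. QF N W' z = (\<Sum>k<N. (\<Sum>a<N. B' k a * z a)^2)" by blast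
    define B where "B = (\<lambda>k a. if k < N then (if a < N then B' k a else 0) else (if a = N then sqrt c else W a N / sqrt c))"
    have "QF (Suc N) W z = (\<Sum>k<Suc N. (\<Sum>a<Suc N. B k a * z a)^2)" for z
    proof -
      define s where "s = (\<Sum>a<N. W a N * z a)"
      have row: "(\<Sum>a<Suc N. B N a * z a) = s / sqrt c + sqrt c * z N"
        by (simp add: B_def s_def sum_divide_distrib)
      have rows: "(\<Sum>k<N. (\<Sum>a<Suc N. B k a * z a)^2) = QF N W' z"
        by (simp add: B' B_def)
      have scnz: "sqrt c \<noteq> 0" using cpos by simp
      have "(s / sqrt c + sqrt c * z N)^2 = (s/sqrt c)^2 + 2 * (s / sqrt c) * (sqrt c * z N) + (sqrt c * z N)^2"
        by (simp add: power2_eq_square algebra_simps)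
      also have "(s/sqrt c)^2 = s^2/c" using cpos by (simp add: power_divide)
      also have "2 * (s / sqrt c) * (sqrt c * z N) = 2 * z N * s" using scnz by (simp add: field_simps)
      also have "(sqrt c * z N)^2 = c * (z N)^2" using cpos by (simp add: power_mult_distrib)
      finally have sq: "(s / sqrt c + sqrt c * z N)^2 = s^2 / c + 2 * z N * s + c * (z N)^2" .
      have "QF N W' z = QF N W z - s^2 / c" by (simp add: W'_def QF_sub s_def)
      then show ?thesis using rows row sq by (simp add: QF_Suc[OF sym] s_def c_def)
    qed
    then show ?thesis by blast
  next
    case True
    have col: "W a N = 0" if "a < N" for a
    proof (rule ccontr)
      assume w: "W a N \<noteq> 0"
      define t where "t = - (W a a + 1) / (2 * W a N)"
      define z where "z = (\<lambda>i. if i = a then 1 else if i = N then t else (0::real))"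
      have "QF N W z = QF N W (\<lambda>i. if i = a then 1 else 0)" by (rule QF_cong) (simp add: z_def)
      then have e1: "QF N W z = W a a" using QF_unit[OF that] by simp
      have "(\<Sum>i<N. W i N * z i) = (\<Sum>i<N. W i N * (if i = a then 1 else 0))"
        by (rule sum.cong) (auto simp: z_def)
      then have e2: "(\<Sum>i<N. W i N * z i) = W a N" using that by (simp add: sum_ind_r)
      have e3: "z N = t" using that by (simp add: z_def)
      have e4: "W N N = 0" using True by (simp add: c_def)
      have "QF (Suc N) W z = W a a + 2 * t * W a N"
        unfolding QF_Suc[OF sym] e1 e2 e3 e4 by simp
      also have "\<dots> = -1" using w by (simp add: t_def field_simps)
      finally show False using Suc.prems(2)[of z] by simp
    qed
    have eqQ: "QF (Suc N) W z = QF N W z" for z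
    proof -
      have "(\<Sum>a<N. W a N * z a) = 0" by (rule sum.neutral) (simp add: col)
      moreover have "W N N = 0" using True by (simp add: c_def)
      ultimately show ?thesis unfolding QF_Suc[OF sym] by simp
    qed
    have psd': "0 \<le> QF N W z" for z using Suc.prems(2)[of z] eqQ[of z] by simp
    from Suc.IH[OF sym psd'] obtain B' where B': "\<And>z. QF N W z = (\<Sum>k<N. (\<Sum>a<N. B' k a * z a)^2)" by blast
    define B where "B = (\<lambda>k a. if k < N \<and> a < N then B' k a else 0)"
    have "QF (Suc N) W z = (\<Sum>k<Suc N. (\<Sum>a<Suc N. B k a * z a)^2)" for z
    proof -
      have "(\<Sum>k<Suc N. (\<Sum>a<Suc N. B k a * z a)^2) = (\<Sum>k<N. (\<Sum>a<N. B' k a * z a)^2)"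
        by (simp add: B_def)
      then show ?thesis using eqQ[of z] B'[of z] by simp
    qed
    then show ?thesis by blast
  qed
qed

definition wgt :: "nat \<Rightarrow> real" where
  "wgt m = inverse (real (Suc m) * real (Suc (Suc m)))"

lemma wgt_mult: "real (Suc m) * (real (Suc (Suc m)) * (c * wgt m)) = c"
proof -
  have a: "real (Suc m) * real (Suc (Suc m)) \<noteq> 0" by simp
  have "real (Suc m) * (real (Suc (Suc m)) * (c * wgt m)) = c * ((real (Suc m) * real (Suc (Suc m))) * inverse (real (Suc m) * real (Suc (Suc m))))"
    by (simp only: wgt_def mult_ac)
  also have "\<dots> = c" using a by (metis right_inverse mult_1_right)
  finally show ?thesis .
qed

lemma wgt_mult2: "real (Suc m) * (real (Suc (Suc m)) * c) * wgt m = c"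
  by (simp only: mult.assoc wgt_mult)

lemma wgt_pos: "wgt m > 0" by (simp add: wgt_def)

lemma taylor2_coeff:
  fixes \<phi> :: "real poly"
  assumes "degree \<phi> \<le> M"
  shows "poly \<phi> 1 - poly \<phi> 0 - poly (pderiv \<phi>) 0 = (\<Sum>m\<le>M. coeff (pderiv (pderiv \<phi>)) m * wgt m)"
proof -
  have "poly \<phi> 1 = (\<Sum>i\<le>degree \<phi>. coeff \<phi> i)" by (simp add: poly_altdef)
  also have "\<dots> = (\<Sum>i\<le>Suc (Suc M). coeff \<phi> i)"
    by (rule sum.mono_neutral_left) (use assms in \<open>auto simp: coeff_eq_0\<close>)
  also have "\<dots> = coeff \<phi> 0 + coeff \<phi> 1 + (\<Sum>m\<le>M. coeff \<phi> (Suc (Suc m)))"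
    by (simp only: sum.atMost_Suc_shift) simp
  finally have "poly \<phi> 1 - poly \<phi> 0 - poly (pderiv \<phi>) 0 = (\<Sum>m\<le>M. coeff \<phi> (Suc (Suc m)))"
    by (simp add: poly_0_coeff_0 coeff_pderiv)
  also have "\<dots> = (\<Sum>m\<le>M. coeff (pderiv (pderiv \<phi>)) m * wgt m)"
    by (intro sum.cong refl) (simp only: coeff_pderiv wgt_mult2)
  finally show ?thesis .
qed

lemma taylor2_nonneg:
  fixes \<phi> :: "real poly"
  assumes "\<And>s. 0 \<le> poly (pderiv (pderiv \<phi>)) s"
  shows "0 \<le> poly \<phi> 1 - poly \<phi> 0 - poly (pderiv \<phi>) 0"
proof -
  have mono: "poly (pderiv \<phi>) 0 \<le> poly (pderiv \<phi>) s" if "0 \<le> s" for s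
    by (rule DERIV_nonneg_imp_nondecreasing[OF that]) (use assms in \<open>auto intro: poly_DERIV\<close>)
  have "poly \<phi> 0 - 0 * poly (pderiv \<phi>) 0 \<le> poly \<phi> 1 - 1 * poly (pderiv \<phi>) 0"
  proof (rule DERIV_nonneg_imp_nondecreasing[of 0 1 "\<lambda>s. poly \<phi> s - s * poly (pderiv \<phi>) 0"])
    fix x :: real assume "0 \<le> x" "x \<le> 1"
    show "\<exists>y. ((\<lambda>s. poly \<phi> s - s * poly (pderiv \<phi>) 0) has_real_derivative y) (at x) \<and> 0 \<le> y"
      by (rule exI[of _ "poly (pderiv \<phi>) x - poly (pderiv \<phi>) 0"])
         (use mono[OF \<open>0 \<le> x\<close>] in \<open>auto intro!: derivative_eq_intros poly_DERIV\<close>)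
  qed simp
  then show ?thesis by simp
qed

lemma conv_sum:
  fixes g :: "real poly"
  assumes "degree g \<le> N"
  shows "(\<Sum>m\<le>2*N. coeff (g*g) m * w m) = (\<Sum>a\<le>N. \<Sum>b\<le>N. coeff g a * coeff g b * w (a+b))"
proof -
  have g: "g = (\<Sum>a\<le>N. monom (coeff g a) a)" using poly_as_sum_of_monoms'[OF assms] by simp
  have gg: "g * g = (\<Sum>a\<le>N. \<Sum>b\<le>N. monom (coeff g a * coeff g b) (a+b))"
    by (subst (1 2) g) (simp add: sum_product mult_monom)
  have inner: "(\<Sum>m\<le>2*N. (if a + b = m then X else 0) * w m) = X * w (a+b)" if "a \<le> N" "b \<le> N" for a b X
  proof -
    have "(\<Sum>m\<le>2*N. (if a + b = m then X else 0) * w m) = (\<Sum>m\<le>2*N. if m = a + b then X * w m else 0)"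
      by (intro sum.cong) auto
    also have "\<dots> = X * w (a+b)" using that by (simp add: sum.delta)
    finally show ?thesis .
  qed
  have "(\<Sum>m\<le>2*N. coeff (g*g) m * w m) = (\<Sum>m\<le>2*N. \<Sum>a\<le>N. \<Sum>b\<le>N. (if a + b = m then coeff g a * coeff g b else 0) * w m)"
    by (simp add: gg coeff_sum sum_distrib_right)
  also have "\<dots> = (\<Sum>a\<le>N. \<Sum>m\<le>2*N. \<Sum>b\<le>N. (if a + b = m then coeff g a * coeff g b else 0) * w m)"
    by (simp only: sum.swap[of _ "{..2*N}"])
  also have "\<dots> = (\<Sum>a\<le>N. \<Sum>b\<le>N. \<Sum>m\<le>2*N. (if a + b = m then coeff g a * coeff g b else 0) * w m)"
    by (simp only: sum.swap[of _ "{..2*N}"])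
  also have "\<dots> = (\<Sum>a\<le>N. \<Sum>b\<le>N. coeff g a * coeff g b * w (a+b))"
    by (intro sum.cong refl) (simp add: inner)
  finally show ?thesis .
qed

lemma W_psd:
  "0 \<le> (\<Sum>a\<le>N. \<Sum>b\<le>N. z a * z b * wgt (a+b))"
proof -
  define Z where "Z = (\<Sum>a\<le>N. monom (z a) a)"
  define \<phi> where "\<phi> = (\<Sum>a\<le>N. \<Sum>b\<le>N. monom (z a * z b * wgt (a+b)) (a+b+2))"
  have ZZ: "Z * Z = (\<Sum>a\<le>N. \<Sum>b\<le>N. monom (z a * z b) (a+b))"
    by (simp add: Z_def sum_product mult_monom)
  have "pderiv (pderiv \<phi>) = Z * Z"
  proof (rule poly_eqI)
    fix m
    have "coeff (pderiv (pderiv \<phi>)) m = real (Suc m) * (real (Suc (Suc m)) * coeff \<phi> (Suc (Suc m)))"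
      by (simp add: coeff_pderiv)
    also have "\<dots> = (\<Sum>a\<le>N. \<Sum>b\<le>N. if a + b = m then z a * z b else 0)"
      unfolding \<phi>_def coeff_sum sum_distrib_left
    proof (intro sum.cong refl)
      fix a b
      show "real (Suc m) * (real (Suc (Suc m)) * coeff (monom (z a * z b * wgt (a + b)) (a + b + 2)) (Suc (Suc m)))
         = (if a + b = m then z a * z b else 0)"
      proof (cases "a + b = m")
        case True
        then have "coeff (monom (z a * z b * wgt (a + b)) (a + b + 2)) (Suc (Suc m)) = z a * z b * wgt m" by simp
        then show ?thesis using True by (simp only: wgt_mult) simp
      next
        case False
        then show ?thesis by simp
      qed
    qed
    also have "\<dots> = coeff (Z * Z) m" by (simp add: ZZ coeff_sum)
    finally show "coeff (pderiv (pderiv \<phi>)) m = coeff (Z * Z) m" .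
  qed
  then have "0 \<le> poly \<phi> 1 - poly \<phi> 0 - poly (pderiv \<phi>) 0"
    by (intro taylor2_nonneg) simp
  moreover have "poly \<phi> 1 = (\<Sum>a\<le>N. \<Sum>b\<le>N. z a * z b * wgt (a+b))"
    by (simp add: \<phi>_def poly_sum poly_monom)
  moreover have "poly \<phi> 0 = 0" by (simp add: \<phi>_def poly_sum poly_monom)
  moreover have "poly (pderiv \<phi>) 0 = 0" by (simp add: poly_0_coeff_0 coeff_pderiv \<phi>_def coeff_sum)
  ultimately show ?thesis by simp
qed


definition sosf :: "nat \<Rightarrow> (real^'n::finite \<Rightarrow> real) \<Rightarrow> bool" where
  "sosf r \<sigma> \<longleftrightarrow> (\<exists>(I::nat set) q. finite I \<and> (\<forall>i\<in>I. pf r (q i)) \<and> (\<forall>x. \<sigma> x = (\<Sum>i\<in>I. (q i x)^2)))"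

lemma sosfE:
  assumes "sosf r \<sigma>"
  obtains I :: "nat set" and q where "finite I" "\<forall>i\<in>I. pf r (q i)" "\<And>x. \<sigma> x = (\<Sum>i\<in>I. (q i x)^2)"
  using assms unfolding sosf_def by blast

lemma sosfI: "finite (I::nat set) \<Longrightarrow> (\<And>i. i \<in> I \<Longrightarrow> pf r (q i)) \<Longrightarrow> (\<And>x. \<sigma> x = (\<Sum>i\<in>I. (q i x)^2)) \<Longrightarrow> sosf r \<sigma>"
  unfolding sosf_def by blast

lemma sosf_cong: "sosf r \<sigma> \<Longrightarrow> (\<And>x. \<sigma> x = \<tau> x) \<Longrightarrow> sosf r \<tau>"
  unfolding sosf_def by simp

lemma sosf_sq: "pf r f \<Longrightarrow> sosf r (\<lambda>x. (f x)^2)"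
  by (rule sosfI[of "{0}" r "\<lambda>_. f"]) auto

lemma sosf_zero: "sosf r (\<lambda>x. 0)"
  by (rule sosfI[of "{}"]) auto

lemma sosf_const: "0 \<le> c \<Longrightarrow> sosf r (\<lambda>x. c)"
  using sosf_sq[OF pf_const[of r "sqrt c"]] by (rule sosf_cong) simp

lemma sosf_add:
  assumes "sosf r \<sigma>" "sosf r \<tau>" shows "sosf r (\<lambda>x. \<sigma> x + \<tau> x)"
proof -
  from assms(1) obtain I :: "nat set" and a where I: "finite I" "\<forall>i\<in>I. pf r (a i)" "\<And>x. \<sigma> x = (\<Sum>i\<in>I. (a i x)^2)"
    unfolding sosf_def by blast
  from assms(2) obtain J :: "nat set" and b where J: "finite J" "\<forall>i\<in>J. pf r (b i)" "\<And>x. \<tau> x = (\<Sum>i\<in>J. (b i x)^2)"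
    unfolding sosf_def by blast
  define K where "K = (\<lambda>i. 2 * i) ` I \<union> (\<lambda>i. 2 * i + 1) ` J"
  define c where "c = (\<lambda>k::nat. if even k then a (k div 2) else b (k div 2))"
  have "2 * i \<noteq> 2 * j + (1::nat)" for i j by presburger
  then have disj: "(\<lambda>i. 2 * i) ` I \<inter> (\<lambda>i. 2 * i + 1) ` J = {}" by blast
  show ?thesis
  proof (rule sosfI[of K r c])
    show "finite K" using I J by (simp add: K_def)
    show "pf r (c k)" if "k \<in> K" for k using that I J by (auto simp: K_def c_def)
    fix x
    have "(\<Sum>k\<in>K. (c k x)^2) = (\<Sum>k\<in>(\<lambda>i. 2 * i) ` I. (c k x)^2) + (\<Sum>k\<in>(\<lambda>i. 2 * i + 1) ` J. (c k x)^2)"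
      unfolding K_def by (rule sum.union_disjoint) (use I J disj in auto)
    also have "(\<Sum>k\<in>(\<lambda>i. 2 * i) ` I. (c k x)^2) = \<sigma> x"
      by (subst sum.reindex) (auto simp: inj_on_def c_def I(3))
    also have "(\<Sum>k\<in>(\<lambda>i. 2 * i + 1) ` J. (c k x)^2) = \<tau> x"
      by (subst sum.reindex) (auto simp: inj_on_def c_def J(3))
    finally show "\<sigma> x + \<tau> x = (\<Sum>k\<in>K. (c k x)^2)" by simp
  qed
qed

lemma sosf_sum: "finite S \<Longrightarrow> (\<And>s. s \<in> S \<Longrightarrow> sosf r (\<sigma> s)) \<Longrightarrow> sosf r (\<lambda>x. \<Sum>s\<in>S. \<sigma> s x)"
proof (induction S rule: finite_induct)
  case empty then show ?case using sosf_zero by simp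
next
  case (insert s S) then show ?case using sosf_add[of r "\<sigma> s" "\<lambda>x. \<Sum>s\<in>S. \<sigma> s x"] by simp
qed

lemma sosf_cmult: "0 \<le> c \<Longrightarrow> sosf r \<sigma> \<Longrightarrow> sosf r (\<lambda>x. c * \<sigma> x)"
proof -
  assume "0 \<le> c" "sosf r \<sigma>"
  from \<open>sosf r \<sigma>\<close> obtain I :: "nat set" and a where I: "finite I" "\<forall>i\<in>I. pf r (a i)" "\<And>x. \<sigma> x = (\<Sum>i\<in>I. (a i x)^2)"
    unfolding sosf_def by blast
  show ?thesis
  proof (rule sosfI[of I r "\<lambda>i x. sqrt c * a i x"])
    show "finite I" by fact
    show "pf r (\<lambda>x. sqrt c * a i x)" if "i \<in> I" for i using I(2) that by (simp add: pf_cmult)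
    fix x show "c * \<sigma> x = (\<Sum>i\<in>I. (sqrt c * a i x)^2)"
      using \<open>0 \<le> c\<close> by (simp add: I(3) sum_distrib_left power_mult_distrib)
  qed
qed

lemma sosf_sos_mpoly: "sosf r \<sigma> \<Longrightarrow> sos_mpoly r \<sigma>"
proof -
  assume "sosf r \<sigma>"
  then obtain I :: "nat set" and q where I: "finite I" "\<forall>i\<in>I. pf r (q i)" "\<And>x. \<sigma> x = (\<Sum>i\<in>I. (q i x)^2)"
    unfolding sosf_def by blast
  from ex_bij_betw_nat_finite[OF I(1)] obtain h where h: "bij_betw h {0..<card I} I" by blast
  define qc where "qc = (\<lambda>k. SOME c. mpoly_deg_le r c \<and> is_mpoly c \<and> (\<forall>x. q (h k) x = peval c x))"
  have qc: "mpoly_deg_le r (qc k) \<and> is_mpoly (qc k) \<and> (\<forall>x. q (h k) x = peval (qc k) x)" if "k < card I" for k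
  proof -
    have "h k \<in> I" using h that by (auto simp: bij_betw_def)
    then have "pf r (q (h k))" using I(2) by blast
    from pf_to_peval[OF this] show ?thesis unfolding qc_def by (rule someI_ex)
  qed
  have "\<sigma> x = (\<Sum>k<card I. (peval (qc k) x)^2)" for x
  proof -
    have "(\<Sum>k\<in>{0..<card I}. (q (h k) x)^2) = (\<Sum>i\<in>I. (q i x)^2)"
      by (rule sum.reindex_bij_betw[OF h])
    moreover have "(\<Sum>k\<in>{0..<card I}. (q (h k) x)^2) = (\<Sum>k<card I. (peval (qc k) x)^2)"
      using qc by (simp add: atLeast0LessThan)
    ultimately show ?thesis using I(3) by simp
  qed
  then show ?thesis unfolding sos_mpoly_def using qc by blast
qed

lemma mon_scale: "mon \<alpha> (t *\<^sub>R x) = t ^ (sum \<alpha> UNIV) * mon \<alpha> x"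
  by (simp add: mon_def power_mult_distrib prod.distrib power_sum)

lemma coeff_sq_top:
  fixes P :: "real poly"
  assumes "degree P \<le> n"
  shows "coeff (P * P) (2 * n) = (coeff P n)^2"
proof (cases "degree P = n")
  case True
  then show ?thesis using coeff_mult_degree_sum[of P P] by (simp add: power2_eq_square mult_2)
next
  case False
  then have "degree P < n" using assms by simp
  then have "coeff P n = 0" by (simp add: coeff_eq_0)
  moreover have "degree (P * P) < 2 * n"
    using degree_mult_le[of P P] \<open>degree P < n\<close> by linarith
  ultimately show ?thesis by (simp add: coeff_eq_0)
qed

lemma pf_rep_poly:
  assumes "\<And>x. f x = (\<Sum>\<alpha>\<in>exps D. a \<alpha> * mon \<alpha> x)"
  shows "poly (\<Sum>\<alpha>\<in>exps D. monom (a \<alpha> * mon \<alpha> x) (sum \<alpha> UNIV)) t = f (t *\<^sub>R x)"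
    and "degree (\<Sum>\<alpha>\<in>exps D. monom (a \<alpha> * mon \<alpha> x) (sum \<alpha> UNIV)) \<le> D"
    and "coeff (\<Sum>\<alpha>\<in>exps D. monom (a \<alpha> * mon \<alpha> x) (sum \<alpha> UNIV)) n = (\<Sum>\<alpha>\<in>exps D. if sum \<alpha> UNIV = n then a \<alpha> * mon \<alpha> x else 0)"
proof -
  show "poly (\<Sum>\<alpha>\<in>exps D. monom (a \<alpha> * mon \<alpha> x) (sum \<alpha> UNIV)) t = f (t *\<^sub>R x)"
    by (simp add: assms poly_sum poly_monom mon_scale mult_ac)
  show "degree (\<Sum>\<alpha>\<in>exps D. monom (a \<alpha> * mon \<alpha> x) (sum \<alpha> UNIV)) \<le> D"
    by (rule degree_sum_le[OF finite_exps]) (auto simp: exps_def intro: order_trans[OF degree_monom_le])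
  show "coeff (\<Sum>\<alpha>\<in>exps D. monom (a \<alpha> * mon \<alpha> x) (sum \<alpha> UNIV)) n = (\<Sum>\<alpha>\<in>exps D. if sum \<alpha> UNIV = n then a \<alpha> * mon \<alpha> x else 0)"
    by (simp add: coeff_sum)
qed

lemma TD_step:
  fixes q :: "nat \<Rightarrow> real^'n::finite \<Rightarrow> real"
  assumes I: "finite I" and q: "\<forall>i\<in>I. pf (Suc E) (q i)" and f: "pf (2 * D) (\<lambda>x. \<Sum>i\<in>I. (q i x)^2)"
    and DE: "D \<le> E"
  shows "\<forall>i\<in>I. pf E (q i)"
proof -
  from q have "\<forall>i\<in>I. \<exists>a. \<forall>x. q i x = (\<Sum>\<alpha>\<in>exps (Suc E). a \<alpha> * mon \<alpha> x)" by (simp add: pf_def)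
  then obtain A where A: "\<And>i x. i \<in> I \<Longrightarrow> q i x = (\<Sum>\<alpha>\<in>exps (Suc E). A i \<alpha> * mon \<alpha> x)"
    by metis
  from f obtain b where b: "\<And>x. (\<Sum>i\<in>I. (q i x)^2) = (\<Sum>\<alpha>\<in>exps (2 * D). b \<alpha> * mon \<alpha> x)"
    by (auto simp: pf_def)
  define T where "T = {\<alpha>\<in>(exps (Suc E) :: ('n \<Rightarrow> nat) set). sum \<alpha> UNIV = Suc E}"
  have fT: "finite T" by (simp add: T_def)
  define h where "h = (\<lambda>i x. \<Sum>\<alpha>\<in>T. A i \<alpha> * mon \<alpha> x)"
  have hz: "h i x = 0" if "i \<in> I" for i x
  proof -
    define P where "P = (\<lambda>i. \<Sum>\<alpha>\<in>exps (Suc E). monom (A i \<alpha> * mon \<alpha> x) (sum \<alpha> UNIV))"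
    define Fp where "Fp = (\<Sum>\<alpha>\<in>exps (2 * D). monom (b \<alpha> * mon \<alpha> x) (sum \<alpha> UNIV))"
    have "poly (\<Sum>i\<in>I. P i ^ 2) t = poly Fp t" for t
    proof -
      have Pi: "poly (P i) t = q i (t *\<^sub>R x)" if "i \<in> I" for i
        unfolding P_def by (rule pf_rep_poly(1)[OF A[OF that]])
      have "poly (\<Sum>i\<in>I. P i ^ 2) t = (\<Sum>i\<in>I. (q i (t *\<^sub>R x))^2)"
        unfolding poly_sum poly_power by (intro sum.cong refl) (simp add: Pi)
      also have "\<dots> = poly Fp t" unfolding Fp_def by (rule pf_rep_poly(1)[OF b, symmetric])
      finally show ?thesis .
    qed
    then have eq: "(\<Sum>i\<in>I. P i ^ 2) = Fp" by (simp add: poly_eq_poly_eq_iff[symmetric] fun_eq_iff)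
    have "coeff Fp (2 * Suc E) = 0"
      unfolding Fp_def pf_rep_poly(3)[OF b] by (rule sum.neutral) (use DE in \<open>auto simp: exps_def\<close>)
    moreover have "coeff (\<Sum>i\<in>I. P i ^ 2) (2 * Suc E) = (\<Sum>i\<in>I. (h i x)^2)"
    proof -
      have "coeff (P i ^ 2) (2 * Suc E) = (h i x)^2" if "i \<in> I" for i
      proof -
        have dP: "degree (P i) \<le> Suc E" unfolding P_def by (rule pf_rep_poly(2)[OF A[OF that]])
        have "coeff (P i) (Suc E) = h i x"
          unfolding P_def pf_rep_poly(3)[OF A[OF that]] h_def T_def
          by (simp add: sum.inter_filter[symmetric] if_distrib cong: if_cong)
        then show ?thesis using coeff_sq_top[OF dP] by (simp add: power2_eq_square)
      qed
      then show ?thesis by (simp add: coeff_sum)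
    qed
    ultimately have "(\<Sum>i\<in>I. (h i x)^2) = 0" using eq by simp
    then show ?thesis using that I by (simp add: sum_nonneg_eq_0_iff)
  qed
  have A0: "A i \<alpha> = 0" if "i \<in> I" "\<alpha> \<in> T" for i \<alpha>
    using mon_indep[OF fT, of "A i" \<alpha>] hz[OF that(1)] that(2) by (simp add: h_def)
  show ?thesis
  proof
    fix i assume i: "i \<in> I"
    have "q i x = (\<Sum>\<alpha>\<in>exps E. A i \<alpha> * mon \<alpha> x)" for x
    proof -
      have "q i x = (\<Sum>\<alpha>\<in>exps (Suc E). A i \<alpha> * mon \<alpha> x)" by (rule A[OF i])
      also have "\<dots> = (\<Sum>\<alpha>\<in>exps E. A i \<alpha> * mon \<alpha> x)"
      proof (rule sum.mono_neutral_right)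
        show "exps E \<subseteq> exps (Suc E)" by (rule exps_mono) simp
        show "\<forall>\<alpha>\<in>exps (Suc E) - exps E. A i \<alpha> * mon \<alpha> x = 0"
          using A0[OF i] by (auto simp: T_def exps_def)
      qed simp
      finally show ?thesis .
    qed
    then show "pf E (q i)" unfolding pf_def by blast
  qed
qed

lemma TD:
  fixes q :: "nat \<Rightarrow> real^'n::finite \<Rightarrow> real"
  shows "finite I \<Longrightarrow> \<forall>i\<in>I. pf E (q i) \<Longrightarrow> pf (2 * D) (\<lambda>x. \<Sum>i\<in>I. (q i x)^2) \<Longrightarrow> \<forall>i\<in>I. pf D (q i)"
proof (induction E)
  case 0 then show ?case by (auto intro: pf_mono)
next
  case (Suc E)
  show ?case
  proof (cases "D \<le> E")
    case True
    from TD_step[OF Suc.prems(1,2,3) True] have "\<forall>i\<in>I. pf E (q i)" .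
    then show ?thesis using Suc.IH Suc.prems by blast
  next
    case False
    then show ?thesis using Suc.prems(2) by (auto intro: pf_mono)
  qed
qed

lemma sosf_TD: "sosf E \<sigma> \<Longrightarrow> pf (2 * D) \<sigma> \<Longrightarrow> sosf D \<sigma>"
proof -
  assume "sosf E \<sigma>" "pf (2 * D) \<sigma>"
  from \<open>sosf E \<sigma>\<close> obtain I :: "nat set" and q where I: "finite I" "\<forall>i\<in>I. pf E (q i)" "\<And>x. \<sigma> x = (\<Sum>i\<in>I. (q i x)^2)"
    unfolding sosf_def by blast
  have "pf (2 * D) (\<lambda>x. \<Sum>i\<in>I. (q i x)^2)" using \<open>pf (2 * D) \<sigma>\<close> I(3) by (simp add: pf_cong)
  from TD[OF I(1,2) this] have "\<forall>i\<in>I. pf D (q i)" .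
  then show ?thesis using I by (intro sosfI[of I D q]) auto
qed


lemma mpoly_deg_le_mono: "mpoly_deg_le D c \<Longrightarrow> D \<le> E \<Longrightarrow> mpoly_deg_le E c"
  using exps_mono by (fastforce simp: mpoly_deg_le_def)

lemma pdiff_deg0: "mpoly_deg_le 0 c \<Longrightarrow> pdiff k c = (\<lambda>_. 0)"
proof
  fix \<beta> assume d0: "mpoly_deg_le 0 c"
  have "c (\<beta>(k := \<beta> k + 1)) = 0"
  proof (rule ccontr)
    assume "c (\<beta>(k := \<beta> k + 1)) \<noteq> 0"
    then have "\<beta>(k := \<beta> k + 1) \<in> exps 0" using d0 by (auto simp: mpoly_deg_le_def)
    moreover have "(\<beta>(k := \<beta> k + 1)) k \<le> sum (\<beta>(k := \<beta> k + 1)) UNIV" by (rule member_le_sum) auto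
    ultimately show False by (simp add: exps_def)
  qed
  then show "pdiff k c \<beta> = 0" by (simp add: pdiff_def)
qed

lemma peval_zero[simp]: "peval (\<lambda>_. 0) x = 0" by (simp add: peval_def)

lemma hess_sos_identity:
  fixes v :: "real^'n::finite"
  shows "(\<Sum>k\<in>UNIV. v$k * (\<Sum>l\<in>UNIV. v$l * (\<Sum>t<K. Fv t l * Fv t k))) = (\<Sum>t<K. (\<Sum>k\<in>UNIV. v$k * Fv t k)^2)"
proof -
  have "(\<Sum>t<K. (\<Sum>k\<in>UNIV. v$k * Fv t k)^2) = (\<Sum>t<K. \<Sum>k\<in>UNIV. \<Sum>l\<in>UNIV. v$k * Fv t k * (v$l * Fv t l))"
    by (simp only: power2_eq_square sum_product)
  also have "\<dots> = (\<Sum>k\<in>UNIV. \<Sum>l\<in>UNIV. \<Sum>t<K. v$k * Fv t k * (v$l * Fv t l))"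
    by (simp only: sum.swap[of _ "{..<K}"])
  also have "\<dots> = (\<Sum>k\<in>UNIV. v$k * (\<Sum>l\<in>UNIV. v$l * (\<Sum>t<K. Fv t l * Fv t k)))"
    by (simp add: sum_distrib_left mult_ac)
  finally show ?thesis by simp
qed

lemma pf_lin_shift: "pf 1 (\<lambda>x::real^'n::finite. (x - y)$k)"
  using pf_diff[OF pf_coord[of k] pf_const[of 1 "y$k"]] by simp

lemma HN:
  fixes c :: "('n::finite \<Rightarrow> nat) \<Rightarrow> real" and y :: "real^'n"
  assumes cpoly: "is_mpoly c" and cdeg: "mpoly_deg_le (2*r) c" and csc: "sos_convex c"
  shows "sosf r (\<lambda>x. peval c x - peval c y - (\<Sum>k\<in>UNIV. (x$k - y$k) * peval (pdiff k c) y))"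
proof -
  define \<sigma> where "\<sigma> = (\<lambda>x. peval c x - peval c y - (\<Sum>k\<in>UNIV. (x$k - y$k) * peval (pdiff k c) y))"
  obtain K and F :: "nat \<Rightarrow> 'n \<Rightarrow> ('n \<Rightarrow> nat) \<Rightarrow> real" where Fp: "\<forall>t<K. \<forall>k. is_mpoly (F t k)"
    and hess: "\<forall>k l x. peval (pdiff k (pdiff l c)) x = (\<Sum>t<K. peval (F t k) x * peval (F t l) x)"
    using csc unfolding sos_convex_def by blast
  have "\<forall>tk\<in>{..<K} \<times> (UNIV::'n set). \<exists>D. mpoly_deg_le D (F (fst tk) (snd tk))"
    using Fp is_mpoly_deg by auto
  then obtain Dg where Dg: "\<And>tk. tk \<in> {..<K} \<times> (UNIV::'n set) \<Longrightarrow> mpoly_deg_le (Dg tk) (F (fst tk) (snd tk))"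
    by metis
  define E where "E = (\<Sum>tk\<in>{..<K} \<times> (UNIV::'n set). Dg tk)"
  have FE: "mpoly_deg_le E (F t k)" if "t < K" for t k
  proof -
    have "Dg (t,k) \<le> E" unfolding E_def by (rule member_le_sum) (use that in auto)
    then show ?thesis using Dg[of "(t,k)"] that mpoly_deg_le_mono by auto
  qed
  define N where "N = E + r"
  define S where "S = {\<alpha>. c \<alpha> \<noteq> 0}"
  have fS: "finite S" using cpoly by (simp add: S_def is_mpoly_def)
  have SE: "S \<subseteq> exps (2*r)" using supp_deg[OF cdeg] by (simp add: S_def)
  define \<phi> where "\<phi> = (\<lambda>x. linp S c y (x - y))"
  define G where "G = (\<lambda>t x. \<Sum>k\<in>UNIV. smult ((x - y)$k) (linp {\<alpha>. F t k \<alpha> \<noteq> 0} (F t k) y (x - y)))"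
  have P0: "poly (\<phi> x) s = peval c (y + s *\<^sub>R (x - y))" for x s
    unfolding \<phi>_def S_def by (rule peval_line_poly[OF cpoly])
  have P1: "poly (pderiv (\<phi> x)) s = (\<Sum>k\<in>UNIV. (x - y)$k * peval (pdiff k c) (y + s *\<^sub>R (x - y)))" for x s
  proof -
    have e: "poly (\<phi> x) = (\<lambda>s. peval c (y + s *\<^sub>R (x - y)))" using P0 by (simp add: fun_eq_iff)
    have "DERIV (poly (\<phi> x)) s :> poly (pderiv (\<phi> x)) s" by (rule poly_DERIV)
    moreover have "DERIV (poly (\<phi> x)) s :> (\<Sum>k\<in>UNIV. (x - y)$k * peval (pdiff k c) (y + s *\<^sub>R (x - y)))"
      unfolding e by (rule peval_line_deriv[OF cpoly])
    ultimately show ?thesis by (rule DERIV_unique)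
  qed
  have PG: "poly (G t x) s = (\<Sum>k\<in>UNIV. (x - y)$k * peval (F t k) (y + s *\<^sub>R (x - y)))" if "t < K" for t x s
    unfolding G_def poly_sum poly_smult using Fp that by (simp add: peval_line_poly)
  have P2: "poly (pderiv (pderiv (\<phi> x))) s = (\<Sum>t<K. (poly (G t x) s)^2)" for x s
  proof -
    define v where "v = x - y"
    have "DERIV (poly (pderiv (\<phi> x))) s :> poly (pderiv (pderiv (\<phi> x))) s" by (rule poly_DERIV)
    moreover have "DERIV (poly (pderiv (\<phi> x))) s :> (\<Sum>k\<in>UNIV. v$k * (\<Sum>l\<in>UNIV. v$l * peval (pdiff l (pdiff k c)) (y + s *\<^sub>R v)))"
    proof -
      have e: "poly (pderiv (\<phi> x)) = (\<lambda>s. \<Sum>k\<in>UNIV. v$k * peval (pdiff k c) (y + s *\<^sub>R v))"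
        using P1 by (simp add: fun_eq_iff v_def)
      show ?thesis unfolding e
        by (intro DERIV_sum DERIV_cmult peval_line_deriv is_mpoly_pdiff cpoly)
    qed
    ultimately have "poly (pderiv (pderiv (\<phi> x))) s = (\<Sum>k\<in>UNIV. v$k * (\<Sum>l\<in>UNIV. v$l * peval (pdiff l (pdiff k c)) (y + s *\<^sub>R v)))"
      by (rule DERIV_unique)
    also have "\<dots> = (\<Sum>k\<in>UNIV. v$k * (\<Sum>l\<in>UNIV. v$l * (\<Sum>t<K. peval (F t l) (y + s *\<^sub>R v) * peval (F t k) (y + s *\<^sub>R v))))"
      using hess by simp
    also have "\<dots> = (\<Sum>t<K. (\<Sum>k\<in>UNIV. v$k * peval (F t k) (y + s *\<^sub>R v))^2)"
      by (rule hess_sos_identity)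
    also have "\<dots> = (\<Sum>t<K. (poly (G t x) s)^2)"
      by (intro sum.cong refl) (simp add: PG v_def)
    finally show ?thesis .
  qed
  have P3: "pderiv (pderiv (\<phi> x)) = (\<Sum>t<K. (G t x)^2)" for x
  proof -
    have "poly (pderiv (pderiv (\<phi> x))) s = poly (\<Sum>t<K. (G t x)^2) s" for s
      by (simp add: P2 poly_sum)
    then show ?thesis by (simp add: poly_eq_poly_eq_iff[symmetric] fun_eq_iff)
  qed
  have dphi: "degree (\<phi> x) \<le> 2 * N" for x
    using degree_linp[OF fS SE, of c y "x - y"] by (simp add: \<phi>_def N_def)
  have suppF: "finite {\<alpha>. F t k \<alpha> \<noteq> 0}" "{\<alpha>. F t k \<alpha> \<noteq> 0} \<subseteq> exps E" if "t < K" for t k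
    using Fp that supp_deg[OF FE[OF that]] by (auto simp: is_mpoly_def)
  have dG: "degree (G t x) \<le> N" if "t < K" for t x
    unfolding G_def
  proof (rule degree_sum_le)
    fix k
    have "degree (linp {\<alpha>. F t k \<alpha> \<noteq> 0} (F t k) y (x - y)) \<le> E" by (rule degree_linp[OF suppF[OF that]])
    then show "degree (smult ((x - y)$k) (linp {\<alpha>. F t k \<alpha> \<noteq> 0} (F t k) y (x - y))) \<le> N"
      unfolding N_def using degree_smult_le order_trans by fastforce
  qed simp
  have ppfG: "ppf (1 + E) (G t)" if "t < K" for t
  proof -
    have "ppf (1 + E) (\<lambda>x. \<Sum>k\<in>UNIV. smult ((x - y)$k) (linp {\<alpha>. F t k \<alpha> \<noteq> 0} (F t k) y (x - y)))"
      by (intro ppf_sum ppf_smult pf_lin_shift ppf_linp suppF[OF that]) simp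
    then show ?thesis by (simp add: G_def[abs_def])
  qed
  define Wm where "Wm = (\<lambda>a b. wgt (a + b))"
  have QFW: "QF (Suc N) Wm z = (\<Sum>a\<le>N. \<Sum>b\<le>N. z a * z b * wgt (a+b))" for z
    by (simp add: QF_def Wm_def lessThan_Suc_atMost mult_ac)
  have "\<exists>B. \<forall>z. QF (Suc N) Wm z = (\<Sum>k<Suc N. (\<Sum>a<Suc N. B k a * z a)^2)"
  proof (rule psd_factor)
    show "Wm a b = Wm b a" for a b by (simp add: Wm_def add.commute)
    show "0 \<le> QF (Suc N) Wm z" for z unfolding QFW by (rule W_psd)
  qed
  then obtain B where B: "\<And>z. QF (Suc N) Wm z = (\<Sum>k<Suc N. (\<Sum>a<Suc N. B k a * z a)^2)" by blast
  have main: "\<sigma> x = (\<Sum>t<K. \<Sum>k<Suc N. (\<Sum>a<Suc N. B k a * coeff (G t x) a)^2)" for x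
  proof -
    have "\<sigma> x = poly (\<phi> x) 1 - poly (\<phi> x) 0 - poly (pderiv (\<phi> x)) 0"
      by (simp add: \<sigma>_def P0 P1)
    also have "\<dots> = (\<Sum>m\<le>2*N. coeff (pderiv (pderiv (\<phi> x))) m * wgt m)"
      by (rule taylor2_coeff[OF dphi])
    also have "\<dots> = (\<Sum>m\<le>2*N. \<Sum>t<K. coeff (G t x * G t x) m * wgt m)"
      by (simp add: P3 coeff_sum sum_distrib_right power2_eq_square)
    also have "\<dots> = (\<Sum>t<K. \<Sum>m\<le>2*N. coeff (G t x * G t x) m * wgt m)"
      by (rule sum.swap)
    also have "\<dots> = (\<Sum>t<K. QF (Suc N) Wm (\<lambda>a. coeff (G t x) a))"
    proof (intro sum.cong refl)
      fix t assume "t \<in> {..<K}"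
      then show "(\<Sum>m\<le>2*N. coeff (G t x * G t x) m * wgt m) = QF (Suc N) Wm (\<lambda>a. coeff (G t x) a)"
        unfolding QFW using conv_sum[OF dG, of t x wgt] by simp
    qed
    also have "\<dots> = (\<Sum>t<K. \<Sum>k<Suc N. (\<Sum>a<Suc N. B k a * coeff (G t x) a)^2)"
      by (simp add: B)
    finally show ?thesis .
  qed
  have s1: "sosf (1 + E) \<sigma>"
  proof -
    have "sosf (1 + E) (\<lambda>x. \<Sum>t<K. \<Sum>k<Suc N. (\<Sum>a<Suc N. B k a * coeff (G t x) a)^2)"
    proof (intro sosf_sum sosf_sq)
      fix t k assume "t \<in> {..<K}"
      then have "ppf (1 + E) (G t)" using ppfG by simp
      then show "pf (1 + E) (\<lambda>x. \<Sum>a<Suc N. B k a * coeff (G t x) a)"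
        by (intro pf_sum pf_cmult) (auto simp: ppf_def)
    qed simp_all
    then show ?thesis by (rule sosf_cong) (simp add: main)
  qed
  have s2: "pf (2 * r) \<sigma>"
  proof -
    have lin: "pf (2 * r) (\<lambda>x. \<Sum>k\<in>UNIV. (x$k - y$k) * peval (pdiff k c) y)"
    proof (cases "r = 0")
      case True
      then have "pdiff k c = (\<lambda>_. 0)" for k using cdeg pdiff_deg0 by simp
      then show ?thesis by (simp add: pf_const)
    next
      case False
      have "pf 1 (\<lambda>x. \<Sum>k\<in>UNIV. peval (pdiff k c) y * (x - y)$k)"
        by (intro pf_sum pf_cmult pf_lin_shift) simp
      then have "pf (2 * r) (\<lambda>x. \<Sum>k\<in>UNIV. peval (pdiff k c) y * (x - y)$k)"
        by (rule pf_mono) (use False in simp)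
      then show ?thesis by (rule pf_cong) (simp add: mult.commute)
    qed
    have "pf (2 * r) (\<lambda>x. peval c x - peval c y - (\<Sum>k\<in>UNIV. (x$k - y$k) * peval (pdiff k c) y))"
      by (intro pf_diff pf_peval[OF cdeg] pf_const lin)
    then show ?thesis by (simp add: \<sigma>_def)
  qed
  from sosf_TD[OF s1 s2] show ?thesis by (simp add: \<sigma>_def)
qed


lemma convex_onD2:
  assumes "convex_on C f" "x \<in> C" "y \<in> C" "0 \<le> u" "0 \<le> w" "u + w = 1"
  shows "f (u *\<^sub>R x + w *\<^sub>R y) \<le> u * f x + w * f y"
  using assms unfolding convex_on_def by blast

lemma lagrange1:
  fixes F G :: "'a::real_vector \<Rightarrow> real"
  assumes C: "convex C" and cF: "convex_on C F" and cG: "convex_on C G"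
    and x0: "x0 \<in> C" "G x0 < 0" and hyp: "\<And>x. x \<in> C \<Longrightarrow> G x \<le> 0 \<Longrightarrow> v \<le> F x"
  shows "\<exists>\<mu>\<ge>0. \<forall>x\<in>C. v \<le> F x + \<mu> * G x"
proof -
  define S where "S = {p::real \<times> real. \<exists>x\<in>C. F x - v < fst p \<and> G x < snd p}"
  have convS: "convex S"
  proof (rule convexI)
    fix p q :: "real \<times> real" and u w :: real
    assume p: "p \<in> S" and q: "q \<in> S" and u: "0 \<le> u" and w: "0 \<le> w" and uw: "u + w = 1"
    from p obtain x1 where x1: "x1 \<in> C" "F x1 - v < fst p" "G x1 < snd p" by (auto simp: S_def)
    from q obtain x2 where x2: "x2 \<in> C" "F x2 - v < fst q" "G x2 < snd q" by (auto simp: S_def)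
    define x where "x = u *\<^sub>R x1 + w *\<^sub>R x2"
    have xC: "x \<in> C" unfolding x_def using convexD[OF C x1(1) x2(1) u w uw] .
    have Fx: "F x \<le> u * F x1 + w * F x2" unfolding x_def by (rule convex_onD2[OF cF x1(1) x2(1) u w uw])
    have Gx: "G x \<le> u * G x1 + w * G x2" unfolding x_def by (rule convex_onD2[OF cG x1(1) x2(1) u w uw])
    have strict: "u * a1 + w * a2 < u * b1 + w * b2" if "a1 < b1" "a2 < b2" for a1 a2 b1 b2 :: real
    proof (cases "u = 0")
      case True then have "w = 1" using uw by simp
      then show ?thesis using True that by simp
    next
      case False then have "u > 0" using u by simp
      then have "u * a1 < u * b1" using that by simp
      moreover have "w * a2 \<le> w * b2" using that w by (simp add: mult_left_mono)
      ultimately show ?thesis by simp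
    qed
    have "F x - v < fst (u *\<^sub>R p + w *\<^sub>R q)"
    proof -
      have "u * (F x1 - v) + w * (F x2 - v) < u * fst p + w * fst q" using strict x1(2) x2(2) by blast
      moreover have "u * v + w * v = v" using uw by (metis distrib_right mult_1)
      ultimately show ?thesis using Fx by (simp add: algebra_simps)
    qed
    moreover have "G x < snd (u *\<^sub>R p + w *\<^sub>R q)"
    proof -
      have "u * G x1 + w * G x2 < u * snd p + w * snd q" using strict x1(3) x2(3) by blast
      then show ?thesis using Gx by simp
    qed
    ultimately show "u *\<^sub>R p + w *\<^sub>R q \<in> S" using xC by (auto simp: S_def)
  qed
  have "0 \<notin> S"
  proof
    assume "0 \<in> S"
    then obtain x where "x \<in> C" "F x - v < 0" "G x < 0" by (auto simp: S_def)
    then show False using hyp[of x] by simp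
  qed
  from separating_hyperplane_set_0[OF convS this] obtain a where a: "a \<noteq> 0" "\<And>p. p \<in> S \<Longrightarrow> 0 \<le> inner a p"
    by blast
  obtain \<alpha> \<beta> where ab: "a = (\<alpha>, \<beta>)" by (cases a)
  have sep: "0 \<le> \<alpha> * p1 + \<beta> * p2" if "x \<in> C" "F x - v < p1" "G x < p2" for x p1 p2
    using a(2)[of "(p1, p2)"] that by (auto simp: S_def ab)
  define a0 where "a0 = \<bar>F x0 - v\<bar> + 1"
  define b0 where "b0 = \<bar>G x0\<bar> + 1"
  have a0: "F x0 - v < a0 + s" if "0 \<le> s" for s using that by (simp add: a0_def)
  have b0: "G x0 < b0 + s" if "0 \<le> s" for s using that by (simp add: b0_def)
  have alpha: "0 \<le> \<alpha>"
  proof (rule ccontr)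
    assume "\<not> 0 \<le> \<alpha>"
    then have neg: "\<alpha> < 0" by simp
    define A where "A = \<alpha> * a0 + \<beta> * b0"
    have A: "0 \<le> A" unfolding A_def using sep[OF x0(1) a0[of 0] b0[of 0]] by simp
    define s where "s = A / (- \<alpha>) + 1"
    have s: "0 \<le> s" using A neg by (simp add: s_def)
    have "0 \<le> \<alpha> * (a0 + s) + \<beta> * (b0 + 0)" using sep[OF x0(1) a0[OF s] b0[of 0]] by simp
    also have "\<alpha> * (a0 + s) + \<beta> * (b0 + 0) = \<alpha>" using neg by (simp add: s_def A_def field_simps)
    finally show False using neg by simp
  qed
  have beta: "0 \<le> \<beta>"
  proof (rule ccontr)
    assume "\<not> 0 \<le> \<beta>"
    then have neg: "\<beta> < 0" by simp
    define A where "A = \<alpha> * a0 + \<beta> * b0"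
    have A: "0 \<le> A" unfolding A_def using sep[OF x0(1) a0[of 0] b0[of 0]] by simp
    define s where "s = A / (- \<beta>) + 1"
    have s: "0 \<le> s" using A neg by (simp add: s_def)
    have "0 \<le> \<alpha> * (a0 + 0) + \<beta> * (b0 + s)" using sep[OF x0(1) a0[of 0] b0[OF s]] by simp
    also have "\<alpha> * (a0 + 0) + \<beta> * (b0 + s) = \<beta>" using neg by (simp add: s_def A_def field_simps)
    finally show False using neg by simp
  qed
  have alpha_pos: "0 < \<alpha>"
  proof (rule ccontr)
    assume "\<not> 0 < \<alpha>"
    then have "\<alpha> = 0" using alpha by simp
    then have "\<beta> \<noteq> 0" using a(1) ab by (auto simp: zero_prod_def)
    then have "\<beta> > 0" using beta by simp
    have "G x0 < G x0 / 2" using x0(2) by simp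
    from sep[OF x0(1) a0[of 0] this] have "0 \<le> \<beta> * (G x0 / 2)" using \<open>\<alpha> = 0\<close> by simp
    moreover have "\<beta> * (G x0 / 2) < 0" using \<open>\<beta> > 0\<close> x0(2) by (simp add: mult_pos_neg)
    ultimately show False by simp
  qed
  define \<mu> where "\<mu> = \<beta> / \<alpha>"
  have mu: "0 \<le> \<mu>" using alpha_pos beta by (simp add: \<mu>_def)
  have "v \<le> F x + \<mu> * G x" if x: "x \<in> C" for x
  proof (rule ccontr)
    assume "\<not> v \<le> F x + \<mu> * G x"
    then have d: "0 < v - F x - \<mu> * G x" by simp
    define e where "e = (v - F x - \<mu> * G x) / (2 * (1 + \<mu>))"
    have e: "0 < e" using d mu by (simp add: e_def)
    have "0 \<le> \<alpha> * (F x - v + e) + \<beta> * (G x + e)" using sep[OF x, of "F x - v + e" "G x + e"] e by simp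
    then have "0 \<le> (F x - v + e) + \<mu> * (G x + e)"
      using alpha_pos by (simp add: \<mu>_def field_simps)
    also have "(F x - v + e) + \<mu> * (G x + e) = - (v - F x - \<mu> * G x) + e * (1 + \<mu>)" by (simp add: algebra_simps)
    also have "e * (1 + \<mu>) = (v - F x - \<mu> * G x) / 2" using mu by (simp add: e_def field_simps)
    finally have "0 \<le> - (v - F x - \<mu> * G x) + (v - F x - \<mu> * G x) / 2" .
    moreover have "\<And>D::real. 0 \<le> - D + D / 2 \<Longrightarrow> 0 < D \<Longrightarrow> False" by linarith
    ultimately show False using d by blast
  qed
  then show ?thesis using mu by blast
qed

lemma convex_on_wsum:
  fixes g :: "nat \<Rightarrow> 'a::real_vector \<Rightarrow> real"
  shows "finite I \<Longrightarrow> convex C \<Longrightarrow> (\<And>i. i \<in> I \<Longrightarrow> 0 \<le> lam i \<and> convex_on C (g i)) \<Longrightarrow>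
    convex_on C (\<lambda>x. \<Sum>i\<in>I. lam i * g i x)"
proof (induction I rule: finite_induct)
  case empty then show ?case by (simp add: convex_on_const)
next
  case (insert i I)
  have "convex_on C (\<lambda>x. lam i * g i x + (\<Sum>i\<in>I. lam i * g i x))"
    using insert by (intro convex_on_add convex_on_cmul) auto
  then show ?case using insert by simp
qed

lemma convex_sublevel: "convex C \<Longrightarrow> convex_on C g \<Longrightarrow> convex {x\<in>C. g x \<le> 0}"
proof (rule convexI)
  fix x y u w assume C: "convex C" and g: "convex_on C g" and x: "x \<in> {x\<in>C. g x \<le> 0}" and y: "y \<in> {x\<in>C. g x \<le> 0}"
    and u: "0 \<le> (u::real)" and w: "0 \<le> w" and uw: "u + w = 1"
  have "g (u *\<^sub>R x + w *\<^sub>R y) \<le> u * g x + w * g y" using x y by (intro convex_onD2[OF g _ _ u w uw]) auto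
  also have "\<dots> \<le> 0" using x y u w by (simp add: add_nonpos_nonpos mult_nonneg_nonpos)
  finally show "u *\<^sub>R x + w *\<^sub>R y \<in> {x\<in>C. g x \<le> 0}" using convexD[OF C _ _ u w uw] x y by auto
qed

lemma lagrange:
  fixes f :: "'a::real_vector \<Rightarrow> real" and g :: "nat \<Rightarrow> 'a \<Rightarrow> real"
  shows "convex C \<Longrightarrow> convex_on C f \<Longrightarrow> (\<forall>i\<in>{1..m}. convex_on C (g i)) \<Longrightarrow> x0 \<in> C \<Longrightarrow>
    (\<forall>i\<in>{1..m}. g i x0 < 0) \<Longrightarrow> (\<forall>x\<in>C. (\<forall>i\<in>{1..m}. g i x \<le> 0) \<longrightarrow> v \<le> f x) \<Longrightarrow>
    \<exists>lam. (\<forall>i\<in>{1..m}. 0 \<le> lam i) \<and> (\<forall>x\<in>C. v \<le> f x + (\<Sum>i=1..m. lam i * g i x))"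
proof (induction m arbitrary: C)
  case 0 then show ?case by auto
next
  case (Suc m)
  define C' where "C' = {x\<in>C. g (Suc m) x \<le> 0}"
  have gS: "g (Suc m) x0 < 0" using Suc.prems(5)[rule_format, of "Suc m"] by simp
  have cC': "convex C'" unfolding C'_def using Suc.prems(1,3) by (intro convex_sublevel) auto
  have sub: "C' \<subseteq> C" by (auto simp: C'_def)
  have "\<exists>lam. (\<forall>i\<in>{1..m}. 0 \<le> lam i) \<and> (\<forall>x\<in>C'. v \<le> f x + (\<Sum>i=1..m. lam i * g i x))"
  proof (rule Suc.IH)
    show "convex C'" by (rule cC')
    show "convex_on C' f" using Suc.prems(2) sub cC' by (rule convex_on_subset)
    show "\<forall>i\<in>{1..m}. convex_on C' (g i)" using Suc.prems(3) sub cC' by (auto intro: convex_on_subset)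
    show "x0 \<in> C'" using Suc.prems(4) gS by (auto simp: C'_def)
    show "\<forall>i\<in>{1..m}. g i x0 < 0" using Suc.prems(5) by auto
    show "\<forall>x\<in>C'. (\<forall>i\<in>{1..m}. g i x \<le> 0) \<longrightarrow> v \<le> f x"
    proof (intro ballI impI)
      fix x assume "x \<in> C'" "\<forall>i\<in>{1..m}. g i x \<le> 0"
      then have "\<forall>i\<in>{1..Suc m}. g i x \<le> 0" by (auto simp: C'_def le_Suc_eq)
      then show "v \<le> f x" using Suc.prems(6) \<open>x \<in> C'\<close> sub by auto
    qed
  qed
  then obtain lam where lam: "\<forall>i\<in>{1..m}. 0 \<le> lam i" "\<forall>x\<in>C'. v \<le> f x + (\<Sum>i=1..m. lam i * g i x)" by blast
  have "\<exists>\<mu>\<ge>0. \<forall>x\<in>C. v \<le> (f x + (\<Sum>i=1..m. lam i * g i x)) + \<mu> * g (Suc m) x"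
  proof (rule lagrange1)
    show "convex C" by (rule Suc.prems(1))
    show "convex_on C (\<lambda>x. f x + (\<Sum>i=1..m. lam i * g i x))"
      using Suc.prems(1,2,3) lam(1) by (intro convex_on_add convex_on_wsum) auto
    show "convex_on C (g (Suc m))" using Suc.prems(3) by auto
    show "x0 \<in> C" by (rule Suc.prems(4))
    show "g (Suc m) x0 < 0" by (rule gS)
    show "v \<le> f x + (\<Sum>i=1..m. lam i * g i x)" if "x \<in> C" "g (Suc m) x \<le> 0" for x
      using lam(2) that by (auto simp: C'_def)
  qed
  then obtain \<mu> where mu: "0 \<le> \<mu>" "\<forall>x\<in>C. v \<le> (f x + (\<Sum>i=1..m. lam i * g i x)) + \<mu> * g (Suc m) x" by blast
  define lam' where "lam' = lam(Suc m := \<mu>)"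
  have "(\<Sum>i=1..Suc m. lam' i * g i x) = (\<Sum>i=1..m. lam i * g i x) + \<mu> * g (Suc m) x" for x
  proof -
    have "(\<Sum>i=1..m. lam' i * g i x) = (\<Sum>i=1..m. lam i * g i x)" by (intro sum.cong) (auto simp: lam'_def)
    then show ?thesis by (simp add: lam'_def)
  qed
  moreover have "\<forall>i\<in>{1..Suc m}. 0 \<le> lam' i" using lam(1) mu(1) by (auto simp: lam'_def le_Suc_eq)
  ultimately show ?case using mu(2) by (intro exI[of _ lam']) auto
qed


context
  fixes h :: "real^'n::finite \<Rightarrow> real" and D :: nat and L :: real
  assumes hpf: "pf D h" and hconv: "convex_on UNIV h" and hlb: "\<And>x. L \<le> h x"
begin

lemma h_cont: "isCont h x"
  using pf_continuous[OF hpf] continuous_on_eq_continuous_at[of UNIV h] by simp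

lemma h_cont_on: "continuous_on S h"
  using pf_continuous[OF hpf] continuous_on_subset by blast

lemma line_const:
  assumes "\<And>t. 0 \<le> t \<Longrightarrow> h (x + t *\<^sub>R v) \<le> h x"
  shows "h (x + t *\<^sub>R v) = h x"
proof -
  obtain p where p: "\<And>s. poly p s = h (x + s *\<^sub>R v)" using pf_line_poly[OF hpf, of x v] by blast
  have "\<bar>poly p s\<bar> \<le> \<bar>L\<bar> + \<bar>h x\<bar>" if "0 \<le> s" for s
    using assms[OF that] hlb[of "x + s *\<^sub>R v"] p[of s] by linarith
  then have "poly p t = poly p 0" by (rule poly_bounded_const)
  then show ?thesis using p[of t] p[of 0] by simp
qed

lemma propagate:
  assumes c0: "\<And>t. h (x0 + t *\<^sub>R v) = h x0" and t: "0 \<le> t"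
  shows "h (x + t *\<^sub>R v) \<le> h x"
proof -
  define u where "u = (\<lambda>n::nat. inverse (real (Suc n)))"
  have u0: "u \<longlonglongrightarrow> 0" unfolding u_def by (rule LIMSEQ_inverse_real_of_nat)
  have upos: "0 < u n" for n by (simp add: u_def)
  have ule1: "u n \<le> 1" for n by (simp add: u_def field_simps)
  define z where "z = (\<lambda>n. x + t *\<^sub>R v + u n *\<^sub>R (x0 - x))"
  have zlim: "z \<longlonglongrightarrow> x + t *\<^sub>R v"
    unfolding z_def using tendsto_add[OF tendsto_const tendsto_scaleR[OF u0 tendsto_const], of "x + t *\<^sub>R v" "x0 - x"]
    by simp
  have hz: "h (z n) \<le> (1 - u n) * h x + u n * h x0" for n
  proof -
    have "z n = (1 - u n) *\<^sub>R x + u n *\<^sub>R (x0 + (t / u n) *\<^sub>R v)"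
      using upos[of n] by (simp add: z_def algebra_simps)
    moreover have "h ((1 - u n) *\<^sub>R x + u n *\<^sub>R (x0 + (t / u n) *\<^sub>R v)) \<le> (1 - u n) * h x + u n * h (x0 + (t / u n) *\<^sub>R v)"
      by (rule convex_onD2[OF hconv]) (use upos[of n] ule1[of n] in auto)
    moreover have "h (x0 + (t / u n) *\<^sub>R v) = h x0" by (rule c0)
    ultimately show ?thesis by simp
  qed
  have lim1: "(\<lambda>n. h (z n)) \<longlonglongrightarrow> h (x + t *\<^sub>R v)" by (rule isCont_tendsto_compose[OF h_cont zlim])
  have lim2: "(\<lambda>n. (1 - u n) * h x + u n * h x0) \<longlonglongrightarrow> (1 - 0) * h x + 0 * h x0"
    by (intro tendsto_intros u0)
  show ?thesis using LIMSEQ_le[OF lim1 lim2] hz by simp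
qed

lemma recession:
  assumes "\<And>t. 0 \<le> t \<Longrightarrow> h (x0 + t *\<^sub>R v) \<le> h x0"
  shows "h (x + t *\<^sub>R v) = h x"
proof -
  have c0: "h (x0 + s *\<^sub>R v) = h x0" for s using line_const[OF assms] .
  have "h (x + s *\<^sub>R v) \<le> h x" if "0 \<le> s" for s using propagate[OF c0 that] .
  then show ?thesis by (rule line_const)
qed

lemma attain: "\<exists>y. \<forall>x. h y \<le> h x"
proof -
  define Lin where "Lin = {v. \<forall>x t. h (x + t *\<^sub>R v) = h x}"
  have subL: "subspace Lin"
  proof (rule subspaceI)
    show "0 \<in> Lin" by (simp add: Lin_def)
    fix v w assume v: "v \<in> Lin" and w: "w \<in> Lin"
    show "v + w \<in> Lin" unfolding Lin_def
    proof (intro CollectI allI)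
      fix x t
      have "h (x + t *\<^sub>R (v + w)) = h ((x + t *\<^sub>R v) + t *\<^sub>R w)" by (simp add: algebra_simps)
      also have "\<dots> = h (x + t *\<^sub>R v)" using w by (simp add: Lin_def)
      also have "\<dots> = h x" using v by (simp add: Lin_def)
      finally show "h (x + t *\<^sub>R (v + w)) = h x" .
    qed
  next
    fix c v assume v: "v \<in> Lin"
    show "c *\<^sub>R v \<in> Lin" unfolding Lin_def
    proof (intro CollectI allI)
      fix x t
      have "h (x + t *\<^sub>R (c *\<^sub>R v)) = h (x + (t * c) *\<^sub>R v)" by simp
      also have "\<dots> = h x" using v by (simp add: Lin_def)
      finally show "h (x + t *\<^sub>R (c *\<^sub>R v)) = h x" .
    qed
  qed
  define P where "P = {z. \<forall>w\<in>Lin. inner w z = 0}"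
  have closedP: "closed P"
  proof -
    have "P = (\<Inter>w\<in>Lin. {z. inner w z = 0})" by (auto simp: P_def)
    then show ?thesis by (simp add: closed_INT closed_hyperplane)
  qed
  have decomp: "\<exists>z\<in>P. h x = h z" for x
  proof -
    obtain a z where az: "a \<in> span Lin" "\<And>w. w \<in> span Lin \<Longrightarrow> orthogonal z w" "x = a + z"
      using orthogonal_subspace_decomp_exists by blast
    have spanL: "span Lin = Lin" using subL by simp
    have "z \<in> P" using az(2) spanL by (auto simp: P_def orthogonal_def inner_commute)
    moreover have "h x = h z"
    proof -
      have aL: "a \<in> Lin" using az(1) spanL by simp
      then have "\<forall>x t. h (x + t *\<^sub>R a) = h x" by (simp add: Lin_def)
      then have "h (z + 1 *\<^sub>R a) = h z" by blast
      then show ?thesis using az(3) by (simp add: add.commute)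
    qed
    ultimately show ?thesis by blast
  qed
  define K where "K = P \<inter> {z. h z \<le> h 0}"
  have closedK: "closed K" unfolding K_def
    by (intro closed_Int closedP closed_Collect_le h_cont_on continuous_on_const)
  have zeroK: "0 \<in> K" by (simp add: K_def P_def)
  have boundedK: "bounded K"
  proof (rule ccontr)
    assume "\<not> bounded K"
    then have "\<forall>n::nat. \<exists>z\<in>K. real n < norm z" unfolding bounded_iff by (meson not_le)
    then obtain zs where zs: "\<And>n. zs n \<in> K" "\<And>n. real n < norm (zs n)" by metis
    have zpos: "0 < norm (zs n)" for n using zs(2)[of n] by linarith
    define d where "d = (\<lambda>n. (1 / norm (zs n)) *\<^sub>R zs n)"
    have dn: "d n \<in> sphere 0 1" for n using zpos[of n] by (simp add: d_def)
    obtain l r where l: "l \<in> sphere 0 1" "strict_mono r" "(d \<circ> r) \<longlonglongrightarrow> l"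
      using seq_compactE[OF compact_imp_seq_compact[OF compact_sphere[of 0 1]], of d] dn by blast
    have dP: "d n \<in> P" for n using zs(1)[of n] by (simp add: d_def K_def P_def inner_scaleR_right)
    have lP: "l \<in> P" by (rule closed_sequentially[OF closedP _ l(3)]) (simp add: dP)
    have "h (0 + t *\<^sub>R l) \<le> h 0" if t: "0 \<le> t" for t
    proof -
      have lim1: "(\<lambda>n. h (t *\<^sub>R (d \<circ> r) n)) \<longlonglongrightarrow> h (t *\<^sub>R l)"
        by (rule isCont_tendsto_compose[OF h_cont]) (intro tendsto_intros l(3))
      have ev: "h (t *\<^sub>R (d \<circ> r) n) \<le> h 0" if n: "n \<ge> nat \<lceil>t\<rceil>" for n
      proof -
        define lm where "lm = t / norm (zs (r n))"
        have "real n \<le> real (r n)" using seq_suble[OF l(2), of n] by simp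
        then have "t < norm (zs (r n))" using zs(2)[of "r n"] n by linarith
        then have lam: "0 \<le> lm" "lm \<le> 1" using t zpos[of "r n"] by (auto simp: lm_def field_simps)
        have "t *\<^sub>R (d \<circ> r) n = (1 - lm) *\<^sub>R 0 + lm *\<^sub>R zs (r n)" by (simp add: d_def lm_def)
        then have "h (t *\<^sub>R (d \<circ> r) n) \<le> (1 - lm) * h 0 + lm * h (zs (r n))"
          using convex_onD2[OF hconv, of 0 "zs (r n)" "1 - lm" lm] lam by simp
        also have "\<dots> \<le> (1 - lm) * h 0 + lm * h 0"
          using zs(1)[of "r n"] lam by (simp add: K_def mult_left_mono)
        finally show ?thesis by (simp add: algebra_simps)
      qed
      have "h (t *\<^sub>R l) \<le> h 0"
        by (rule LIMSEQ_le[OF lim1 tendsto_const]) (use ev in blast)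
      then show ?thesis by simp
    qed
    then have "l \<in> Lin" unfolding Lin_def using recession[of 0 l] by blast
    then have "inner l l = 0" using lP by (simp add: P_def)
    then have "l = 0" by simp
    then show False using l(1) by simp
  qed
  have "compact K" using boundedK closedK by (simp add: compact_eq_bounded_closed)
  from continuous_attains_inf[OF this _ h_cont_on] zeroK obtain y where y: "y \<in> K" "\<And>z. z \<in> K \<Longrightarrow> h y \<le> h z"
    by blast
  have "h y \<le> h x" for x
  proof -
    obtain z where z: "z \<in> P" "h x = h z" using decomp by blast
    show ?thesis
    proof (cases "h z \<le> h 0")
      case True then have "z \<in> K" using z by (simp add: K_def)
      then show ?thesis using y(2) z by simp
    next
      case False then show ?thesis using y(2)[OF zeroK] z by simp
    qed
  qed
  then show ?thesis by blast
qed

end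


lemma sum_delta_ind: "finite S \<Longrightarrow> (\<Sum>\<alpha>\<in>S. f \<alpha> * (if \<alpha> = a then 1 else 0)) = (if a \<in> S then f a else (0::real))"
  by (rule sum_ind_r)

lemma ej_exps: "a + b \<le> 2 * D \<Longrightarrow> (\<lambda>l. if l = j then a + b else 0) \<in> exps (2 * D)"
proof -
  assume "a + b \<le> 2 * D"
  have "sum (\<lambda>l. if l = j then a + b else 0) UNIV = a + b" by (simp add: sum.delta)
  then show ?thesis using \<open>a + b \<le> 2 * D\<close> by (simp add: exps_def)
qed

lemma mon_ej: "mon (\<lambda>l. if l = j then e else 0) x = (x$j) ^ e"
proof -
  have "(x$l) ^ (if l = j then e else 0) = (if l = j then (x$l)^e else 1)" for l by simp
  then show ?thesis by (simp add: mon_def prod.delta)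
qed

lemma poly_upto: "degree (p::real poly) \<le> D \<Longrightarrow> poly p t = (\<Sum>a\<in>{0..D}. coeff p a * t ^ a)"
proof -
  assume "degree p \<le> D"
  have "poly p t = (\<Sum>a\<le>degree p. coeff p a * t ^ a)" by (rule poly_altdef)
  also have "\<dots> = (\<Sum>a\<le>D. coeff p a * t ^ a)"
    by (rule sum.mono_neutral_left) (use \<open>degree p \<le> D\<close> in \<open>auto simp: coeff_eq_0\<close>)
  finally show ?thesis by (simp add: atLeast0AtMost)
qed

lemma d_le_d0: "d j \<le> d0 d"
  unfolding d0_def by (rule Max_ge) auto

lemma moment_lower:
  fixes fc :: "('n::finite \<Rightarrow> nat) \<Rightarrow> real" and gc :: "nat \<Rightarrow> ('n \<Rightarrow> nat) \<Rightarrow> real" and d :: "'n \<Rightarrow> nat"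
  assumes feas: "feas_D m r d fc gc \<mu> lam \<sigma> \<sigma>s" and fy: "feas_Dt m r d gc y"
    and fsupp: "{\<alpha>. fc \<alpha> \<noteq> 0} \<subseteq> exps (2 * d0 d)"
    and gsupp: "\<forall>i\<in>{1..m}. {\<alpha>. gc i \<alpha> \<noteq> 0} \<subseteq> exps (2 * d0 d)"
    and rd: "r \<le> d0 d"
  shows "\<mu> \<le> obj_Dt d fc y"
proof -
  define E where "E = (exps (2 * d0 d) :: ('n \<Rightarrow> nat) set)"
  have fE: "finite E" by (simp add: E_def)
  have lam0: "\<forall>i\<in>{1..m}. 0 \<le> lam i" and sosm: "sos_mpoly r \<sigma>" and sosu: "\<forall>j. sos_upoly (d j) (\<sigma>s j)"
    and ident: "\<forall>x. peval fc x + (\<Sum>i=1..m. lam i * peval (gc i) x) - \<mu> = \<sigma> x + (\<Sum>j\<in>UNIV. poly (\<sigma>s j) (x $ j))"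
    using feas by (auto simp: feas_D_def)
  obtain K and q :: "nat \<Rightarrow> ('n \<Rightarrow> nat) \<Rightarrow> real" where q: "\<forall>k<K. mpoly_deg_le r (q k)" "\<forall>x. \<sigma> x = (\<Sum>k<K. (peval (q k) x)^2)"
    using sosm unfolding sos_mpoly_def by blast
  have "\<forall>j. \<exists>Kj (pj :: nat \<Rightarrow> real poly). (\<forall>k<Kj. degree (pj k) \<le> d j) \<and> \<sigma>s j = (\<Sum>k<Kj. (pj k)^2)"
    using sosu unfolding sos_upoly_def by blast
  then obtain Kj and pj :: "'n \<Rightarrow> nat \<Rightarrow> real poly" where
    pj: "\<And>j. \<forall>k<Kj j. degree (pj j k) \<le> d j" "\<And>j. \<sigma>s j = (\<Sum>k<Kj j. (pj j k)^2)"
    by metis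
  have gy: "\<forall>i\<in>{1..m}. (\<Sum>\<alpha>\<in>E. gc i \<alpha> * y \<alpha>) \<le> 0"
    and psdj: "\<forall>j. psd_on {0..d j} (\<lambda>a b. \<Sum>\<alpha>\<in>E. y \<alpha> * (if \<alpha> = (\<lambda>k. if k = j then a + b else 0) then 1 else 0))"
    and psdm: "psd_on (exps r) (\<lambda>\<beta> \<gamma>. \<Sum>\<alpha>\<in>E. y \<alpha> * (if \<alpha> = (\<lambda>k. \<beta> k + \<gamma> k) then 1 else 0))"
    and y0: "y (\<lambda>_. 0) = 1"
    using fy by (auto simp: feas_Dt_def E_def)
  define Cq where "Cq = (\<lambda>k \<alpha>. \<Sum>\<beta>\<in>exps r. \<Sum>\<gamma>\<in>exps r. q k \<beta> * q k \<gamma> * (if \<alpha> = (\<lambda>l. \<beta> l + \<gamma> l) then 1 else 0))"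
  define Cs where "Cs = (\<lambda>j \<alpha>. \<Sum>k<Kj j. \<Sum>a\<in>{0..d j}. \<Sum>b\<in>{0..d j}. coeff (pj j k) a * coeff (pj j k) b * (if \<alpha> = (\<lambda>l. if l = j then a + b else 0) then 1 else 0))"
  define z where "z = (\<lambda>\<alpha>::'n \<Rightarrow> nat. if \<alpha> = (\<lambda>_. 0) then 1 else (0::real))"
  have zE: "(\<lambda>_. 0) \<in> E" by (simp add: E_def exps_def)
  have rE: "exps (r + r) \<subseteq> E" unfolding E_def by (rule exps_mono) (use rd in simp)
  have Cq_eval: "(\<Sum>\<alpha>\<in>E. Cq k \<alpha> * w \<alpha>) = (\<Sum>\<beta>\<in>exps r. \<Sum>\<gamma>\<in>exps r. q k \<beta> * q k \<gamma> * w (\<lambda>l. \<beta> l + \<gamma> l))" for k w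
  proof -
    have "(\<Sum>\<alpha>\<in>E. Cq k \<alpha> * w \<alpha>) = (\<Sum>\<alpha>\<in>E. \<Sum>\<beta>\<in>exps r. \<Sum>\<gamma>\<in>exps r. q k \<beta> * q k \<gamma> * (w \<alpha> * (if \<alpha> = (\<lambda>l. \<beta> l + \<gamma> l) then 1 else 0)))"
      by (simp add: Cq_def sum_distrib_right sum_distrib_left mult_ac)
    also have "\<dots> = (\<Sum>\<beta>\<in>exps r. \<Sum>\<gamma>\<in>exps r. \<Sum>\<alpha>\<in>E. q k \<beta> * q k \<gamma> * (w \<alpha> * (if \<alpha> = (\<lambda>l. \<beta> l + \<gamma> l) then 1 else 0)))"
      by (simp only: sum.swap[of _ E])
    also have "\<dots> = (\<Sum>\<beta>\<in>exps r. \<Sum>\<gamma>\<in>exps r. q k \<beta> * q k \<gamma> * w (\<lambda>l. \<beta> l + \<gamma> l))"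
    proof (intro sum.cong refl)
      fix \<beta> \<gamma> :: "'n \<Rightarrow> nat" assume "\<beta> \<in> exps r" "\<gamma> \<in> exps r"
      then have "(\<lambda>l. \<beta> l + \<gamma> l) \<in> E" using exps_add rE by blast
      then show "(\<Sum>\<alpha>\<in>E. q k \<beta> * q k \<gamma> * (w \<alpha> * (if \<alpha> = (\<lambda>l. \<beta> l + \<gamma> l) then 1 else 0))) = q k \<beta> * q k \<gamma> * w (\<lambda>l. \<beta> l + \<gamma> l)"
        by (simp add: sum_distrib_left[symmetric] sum_delta_ind[OF fE])
    qed
    finally show ?thesis .
  qed
  have Cs_eval: "(\<Sum>\<alpha>\<in>E. Cs j \<alpha> * w \<alpha>) = (\<Sum>k<Kj j. \<Sum>a\<in>{0..d j}. \<Sum>b\<in>{0..d j}. coeff (pj j k) a * coeff (pj j k) b * w (\<lambda>l. if l = j then a + b else 0))" for j w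
  proof -
    have "(\<Sum>\<alpha>\<in>E. Cs j \<alpha> * w \<alpha>) = (\<Sum>\<alpha>\<in>E. \<Sum>k<Kj j. \<Sum>a\<in>{0..d j}. \<Sum>b\<in>{0..d j}. coeff (pj j k) a * coeff (pj j k) b * (w \<alpha> * (if \<alpha> = (\<lambda>l. if l = j then a + b else 0) then 1 else 0)))"
      by (simp add: Cs_def sum_distrib_right sum_distrib_left mult_ac)
    also have "\<dots> = (\<Sum>k<Kj j. \<Sum>a\<in>{0..d j}. \<Sum>b\<in>{0..d j}. \<Sum>\<alpha>\<in>E. coeff (pj j k) a * coeff (pj j k) b * (w \<alpha> * (if \<alpha> = (\<lambda>l. if l = j then a + b else 0) then 1 else 0)))"
      by (simp only: sum.swap[of _ E])
    also have "\<dots> = (\<Sum>k<Kj j. \<Sum>a\<in>{0..d j}. \<Sum>b\<in>{0..d j}. coeff (pj j k) a * coeff (pj j k) b * w (\<lambda>l. if l = j then a + b else 0))"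
    proof (intro sum.cong refl)
      fix k a b assume "a \<in> {0..d j}" "b \<in> {0..d j}"
      then have "a + b \<le> 2 * d0 d" using d_le_d0[of d j] by simp
      then have "(\<lambda>l. if l = j then a + b else 0) \<in> E" unfolding E_def by (rule ej_exps)
      then show "(\<Sum>\<alpha>\<in>E. coeff (pj j k) a * coeff (pj j k) b * (w \<alpha> * (if \<alpha> = (\<lambda>l. if l = j then a + b else 0) then 1 else 0)))
          = coeff (pj j k) a * coeff (pj j k) b * w (\<lambda>l. if l = j then a + b else 0)"
        by (simp add: sum_distrib_left[symmetric] sum_delta_ind[OF fE])
    qed
    finally show ?thesis .
  qed
  have z_eval: "(\<Sum>\<alpha>\<in>E. z \<alpha> * w \<alpha>) = w (\<lambda>_. 0)" for w
    using sum_delta_ind[OF fE, of w "\<lambda>_. 0"] zE by (simp add: z_def mult.commute)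
  have lin_eval: "(\<Sum>\<alpha>\<in>E. (fc \<alpha> + (\<Sum>i=1..m. lam i * gc i \<alpha>) - \<mu> * z \<alpha> - (\<Sum>k<K. Cq k \<alpha>) - (\<Sum>j\<in>UNIV. Cs j \<alpha>)) * w \<alpha>)
     = (\<Sum>\<alpha>\<in>E. fc \<alpha> * w \<alpha>) + (\<Sum>i=1..m. lam i * (\<Sum>\<alpha>\<in>E. gc i \<alpha> * w \<alpha>)) - \<mu> * (\<Sum>\<alpha>\<in>E. z \<alpha> * w \<alpha>)
       - (\<Sum>k<K. \<Sum>\<alpha>\<in>E. Cq k \<alpha> * w \<alpha>) - (\<Sum>j\<in>UNIV. \<Sum>\<alpha>\<in>E. Cs j \<alpha> * w \<alpha>)" for w
  proof -
    have a1: "(\<Sum>\<alpha>\<in>E. (\<Sum>i=1..m. lam i * gc i \<alpha>) * w \<alpha>) = (\<Sum>i=1..m. lam i * (\<Sum>\<alpha>\<in>E. gc i \<alpha> * w \<alpha>))"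
      by (simp add: sum_distrib_right sum_distrib_left mult.assoc) (rule sum.swap)
    have a2: "(\<Sum>\<alpha>\<in>E. (\<Sum>k<K. Cq k \<alpha>) * w \<alpha>) = (\<Sum>k<K. \<Sum>\<alpha>\<in>E. Cq k \<alpha> * w \<alpha>)"
      by (simp add: sum_distrib_right) (rule sum.swap)
    have a3: "(\<Sum>\<alpha>\<in>E. (\<Sum>j\<in>UNIV. Cs j \<alpha>) * w \<alpha>) = (\<Sum>j\<in>UNIV. \<Sum>\<alpha>\<in>E. Cs j \<alpha> * w \<alpha>)"
      by (simp add: sum_distrib_right) (rule sum.swap)
    have a4: "(\<Sum>\<alpha>\<in>E. \<mu> * z \<alpha> * w \<alpha>) = \<mu> * (\<Sum>\<alpha>\<in>E. z \<alpha> * w \<alpha>)"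
      by (simp add: sum_distrib_left mult.assoc)
    have "(\<Sum>\<alpha>\<in>E. (fc \<alpha> + (\<Sum>i=1..m. lam i * gc i \<alpha>) - \<mu> * z \<alpha> - (\<Sum>k<K. Cq k \<alpha>) - (\<Sum>j\<in>UNIV. Cs j \<alpha>)) * w \<alpha>)
      = (\<Sum>\<alpha>\<in>E. fc \<alpha> * w \<alpha>) + (\<Sum>\<alpha>\<in>E. (\<Sum>i=1..m. lam i * gc i \<alpha>) * w \<alpha>) - (\<Sum>\<alpha>\<in>E. \<mu> * z \<alpha> * w \<alpha>)
        - (\<Sum>\<alpha>\<in>E. (\<Sum>k<K. Cq k \<alpha>) * w \<alpha>) - (\<Sum>\<alpha>\<in>E. (\<Sum>j\<in>UNIV. Cs j \<alpha>) * w \<alpha>)"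
      by (simp only: left_diff_distrib distrib_right sum.distrib sum_subtractf)
    then show ?thesis by (simp only: a1 a2 a3 a4)
  qed
  have repr: "(\<Sum>\<alpha>\<in>E. (fc \<alpha> + (\<Sum>i=1..m. lam i * gc i \<alpha>) - \<mu> * z \<alpha> - (\<Sum>k<K. Cq k \<alpha>) - (\<Sum>j\<in>UNIV. Cs j \<alpha>)) * mon \<alpha> x) = 0" for x
  proof -
    have r1: "(\<Sum>\<alpha>\<in>E. fc \<alpha> * mon \<alpha> x) = peval fc x"
      using peval_supp[OF fE, of fc x] fsupp by (simp add: E_def)
    have r2: "(\<Sum>\<alpha>\<in>E. gc i \<alpha> * mon \<alpha> x) = peval (gc i) x" if "i \<in> {1..m}" for i
      using peval_supp[OF fE, of "gc i" x] gsupp that by (simp add: E_def)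
    have r3: "(\<Sum>\<alpha>\<in>E. Cq k \<alpha> * mon \<alpha> x) = (peval (q k) x)^2" if "k < K" for k
    proof -
      have pq: "peval (q k) x = (\<Sum>\<beta>\<in>exps r. q k \<beta> * mon \<beta> x)"
        by (rule peval_supp[OF finite_exps supp_deg]) (use q(1) that in auto)
      show ?thesis unfolding Cq_eval pq power2_eq_square sum_product
        by (intro sum.cong refl) (simp add: mon_add mult_ac)
    qed
    have r4: "(\<Sum>\<alpha>\<in>E. Cs j \<alpha> * mon \<alpha> x) = poly (\<sigma>s j) (x$j)" for j
    proof -
      have "poly (\<sigma>s j) (x$j) = (\<Sum>k<Kj j. (poly (pj j k) (x$j))^2)" by (simp add: pj(2) poly_sum)
      also have "\<dots> = (\<Sum>k<Kj j. (\<Sum>a\<in>{0..d j}. coeff (pj j k) a * (x$j) ^ a)^2)"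
      proof (intro sum.cong refl)
        fix k assume "k \<in> {..<Kj j}"
        then have "degree (pj j k) \<le> d j" using pj(1) by simp
        then show "(poly (pj j k) (x$j))^2 = (\<Sum>a\<in>{0..d j}. coeff (pj j k) a * (x$j) ^ a)^2"
          by (simp only: poly_upto)
      qed
      also have "\<dots> = (\<Sum>\<alpha>\<in>E. Cs j \<alpha> * mon \<alpha> x)"
        unfolding Cs_eval power2_eq_square sum_product
        by (intro sum.cong refl) (simp add: mon_ej power_add mult_ac)
      finally show ?thesis by simp
    qed
    have "(\<Sum>\<alpha>\<in>E. (fc \<alpha> + (\<Sum>i=1..m. lam i * gc i \<alpha>) - \<mu> * z \<alpha> - (\<Sum>k<K. Cq k \<alpha>) - (\<Sum>j\<in>UNIV. Cs j \<alpha>)) * mon \<alpha> x)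
      = peval fc x + (\<Sum>i=1..m. lam i * peval (gc i) x) - \<mu> - (\<Sum>k<K. (peval (q k) x)^2) - (\<Sum>j\<in>UNIV. poly (\<sigma>s j) (x$j))"
      unfolding lin_eval r1 z_eval mon_zero by (simp add: r2 r3 r4)
    also have "\<dots> = 0" using ident q(2) by simp
    finally show ?thesis .
  qed
  have coef0: "fc \<alpha> + (\<Sum>i=1..m. lam i * gc i \<alpha>) - \<mu> * z \<alpha> - (\<Sum>k<K. Cq k \<alpha>) - (\<Sum>j\<in>UNIV. Cs j \<alpha>) = 0" if "\<alpha> \<in> E" for \<alpha>
    using mon_indep[OF fE repr that] .
  have "0 = (\<Sum>\<alpha>\<in>E. (fc \<alpha> + (\<Sum>i=1..m. lam i * gc i \<alpha>) - \<mu> * z \<alpha> - (\<Sum>k<K. Cq k \<alpha>) - (\<Sum>j\<in>UNIV. Cs j \<alpha>)) * y \<alpha>)"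
    using coef0 by simp
  also have "\<dots> = obj_Dt d fc y + (\<Sum>i=1..m. lam i * (\<Sum>\<alpha>\<in>E. gc i \<alpha> * y \<alpha>)) - \<mu>
       - (\<Sum>k<K. \<Sum>\<alpha>\<in>E. Cq k \<alpha> * y \<alpha>) - (\<Sum>j\<in>UNIV. \<Sum>\<alpha>\<in>E. Cs j \<alpha> * y \<alpha>)"
    unfolding lin_eval z_eval y0 by (simp add: obj_Dt_def E_def)
  finally have main: "\<mu> = obj_Dt d fc y + (\<Sum>i=1..m. lam i * (\<Sum>\<alpha>\<in>E. gc i \<alpha> * y \<alpha>))
       - (\<Sum>k<K. \<Sum>\<alpha>\<in>E. Cq k \<alpha> * y \<alpha>) - (\<Sum>j\<in>UNIV. \<Sum>\<alpha>\<in>E. Cs j \<alpha> * y \<alpha>)" by simp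
  have n1: "(\<Sum>i=1..m. lam i * (\<Sum>\<alpha>\<in>E. gc i \<alpha> * y \<alpha>)) \<le> 0"
    by (rule sum_nonpos) (use lam0 gy in \<open>auto simp: mult_nonneg_nonpos\<close>)
  have n2: "0 \<le> (\<Sum>k<K. \<Sum>\<alpha>\<in>E. Cq k \<alpha> * y \<alpha>)"
  proof (rule sum_nonneg)
    fix k
    have "(\<Sum>\<alpha>\<in>E. Cq k \<alpha> * y \<alpha>) = (\<Sum>\<beta>\<in>exps r. \<Sum>\<gamma>\<in>exps r. q k \<beta> * (\<Sum>\<alpha>\<in>E. y \<alpha> * (if \<alpha> = (\<lambda>l. \<beta> l + \<gamma> l) then 1 else 0)) * q k \<gamma>)"
    proof (unfold Cq_eval, intro sum.cong refl)
      fix \<beta> \<gamma> :: "'n \<Rightarrow> nat" assume "\<beta> \<in> exps r" "\<gamma> \<in> exps r"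
      then have "(\<lambda>l. \<beta> l + \<gamma> l) \<in> E" using exps_add rE by blast
      then show "q k \<beta> * q k \<gamma> * y (\<lambda>l. \<beta> l + \<gamma> l) = q k \<beta> * (\<Sum>\<alpha>\<in>E. y \<alpha> * (if \<alpha> = (\<lambda>l. \<beta> l + \<gamma> l) then 1 else 0)) * q k \<gamma>"
        by (simp add: sum_delta_ind[OF fE])
    qed
    also have "\<dots> \<ge> 0" using psdm unfolding psd_on_def by blast
    finally show "0 \<le> (\<Sum>\<alpha>\<in>E. Cq k \<alpha> * y \<alpha>)" .
  qed
  have n3k: "0 \<le> (\<Sum>a\<in>{0..d j}. \<Sum>b\<in>{0..d j}. coeff (pj j k) a * coeff (pj j k) b * y (\<lambda>l. if l = j then a + b else 0))" for j k
  proof -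
    have "(\<Sum>a\<in>{0..d j}. \<Sum>b\<in>{0..d j}. coeff (pj j k) a * coeff (pj j k) b * y (\<lambda>l. if l = j then a + b else 0))
      = (\<Sum>a\<in>{0..d j}. \<Sum>b\<in>{0..d j}. coeff (pj j k) a * (\<Sum>\<alpha>\<in>E. y \<alpha> * (if \<alpha> = (\<lambda>l. if l = j then a + b else 0) then 1 else 0)) * coeff (pj j k) b)"
    proof (intro sum.cong refl)
      fix a b assume "a \<in> {0..d j}" "b \<in> {0..d j}"
      then have "a + b \<le> 2 * d0 d" using d_le_d0[of d j] by simp
      then have "(\<lambda>l. if l = j then a + b else 0) \<in> E" unfolding E_def by (rule ej_exps)
      then show "coeff (pj j k) a * coeff (pj j k) b * y (\<lambda>l. if l = j then a + b else 0)
        = coeff (pj j k) a * (\<Sum>\<alpha>\<in>E. y \<alpha> * (if \<alpha> = (\<lambda>l. if l = j then a + b else 0) then 1 else 0)) * coeff (pj j k) b"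
        by (simp add: sum_delta_ind[OF fE])
    qed
    also have "0 \<le> \<dots>" using psdj unfolding psd_on_def by blast
    finally show ?thesis by simp
  qed
  have n3: "0 \<le> (\<Sum>j\<in>UNIV. \<Sum>\<alpha>\<in>E. Cs j \<alpha> * y \<alpha>)"
    unfolding Cs_eval by (intro sum_nonneg n3k)
  show ?thesis using main n1 n2 n3 by linarith
qed

lemma dirac_feasible:
  fixes gc :: "nat \<Rightarrow> ('n::finite \<Rightarrow> nat) \<Rightarrow> real" and d :: "'n \<Rightarrow> nat"
  assumes gsupp: "\<forall>i\<in>{1..m}. {\<alpha>. gc i \<alpha> \<noteq> 0} \<subseteq> exps (2 * d0 d)"
    and rd: "r \<le> d0 d" and x: "x \<in> feas_CP m gc"
  shows "feas_Dt m r d gc (\<lambda>\<alpha>. mon \<alpha> x)"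
proof -
  define E where "E = (exps (2 * d0 d) :: ('n \<Rightarrow> nat) set)"
  have fE: "finite E" by (simp add: E_def)
  have rE: "exps (r + r) \<subseteq> E" unfolding E_def by (rule exps_mono) (use rd in simp)
  have g: "(\<Sum>\<alpha>\<in>E. gc i \<alpha> * mon \<alpha> x) \<le> 0" if "i \<in> {1..m}" for i
  proof -
    have "(\<Sum>\<alpha>\<in>E. gc i \<alpha> * mon \<alpha> x) = peval (gc i) x"
      using peval_supp[OF fE, of "gc i" x] gsupp that by (simp add: E_def)
    then show ?thesis using x that by (simp add: feas_CP_def)
  qed
  have pj: "psd_on {0..d j} (\<lambda>a b. \<Sum>\<alpha>\<in>E. mon \<alpha> x * (if \<alpha> = (\<lambda>k. if k = j then a + b else 0) then 1 else 0))" for j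
    unfolding psd_on_def
  proof
    fix v :: "nat \<Rightarrow> real"
    have "(\<Sum>a\<in>{0..d j}. \<Sum>b\<in>{0..d j}. v a * (\<Sum>\<alpha>\<in>E. mon \<alpha> x * (if \<alpha> = (\<lambda>k. if k = j then a + b else 0) then 1 else 0)) * v b)
      = (\<Sum>a\<in>{0..d j}. \<Sum>b\<in>{0..d j}. (v a * (x$j)^a) * (v b * (x$j)^b))"
    proof (intro sum.cong refl)
      fix a b assume "a \<in> {0..d j}" "b \<in> {0..d j}"
      then have "a + b \<le> 2 * d0 d" using d_le_d0[of d j] by simp
      then have "(\<lambda>l. if l = j then a + b else 0) \<in> E" unfolding E_def by (rule ej_exps)
      then show "v a * (\<Sum>\<alpha>\<in>E. mon \<alpha> x * (if \<alpha> = (\<lambda>k. if k = j then a + b else 0) then 1 else 0)) * v b = (v a * (x$j)^a) * (v b * (x$j)^b)"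
        by (simp add: sum_delta_ind[OF fE] mon_ej power_add mult_ac)
    qed
    also have "\<dots> = (\<Sum>a\<in>{0..d j}. v a * (x$j)^a)^2" by (simp add: power2_eq_square sum_product)
    finally show "0 \<le> (\<Sum>a\<in>{0..d j}. \<Sum>b\<in>{0..d j}. v a * (\<Sum>\<alpha>\<in>E. mon \<alpha> x * (if \<alpha> = (\<lambda>k. if k = j then a + b else 0) then 1 else 0)) * v b)"
      by simp
  qed
  have pm: "psd_on (exps r) (\<lambda>\<beta> \<gamma>. \<Sum>\<alpha>\<in>E. mon \<alpha> x * (if \<alpha> = (\<lambda>k. \<beta> k + \<gamma> k) then 1 else 0))"
    unfolding psd_on_def
  proof
    fix v :: "('n \<Rightarrow> nat) \<Rightarrow> real"
    have "(\<Sum>\<beta>\<in>exps r. \<Sum>\<gamma>\<in>exps r. v \<beta> * (\<Sum>\<alpha>\<in>E. mon \<alpha> x * (if \<alpha> = (\<lambda>k. \<beta> k + \<gamma> k) then 1 else 0)) * v \<gamma>)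
      = (\<Sum>\<beta>\<in>exps r. \<Sum>\<gamma>\<in>exps r. (v \<beta> * mon \<beta> x) * (v \<gamma> * mon \<gamma> x))"
    proof (intro sum.cong refl)
      fix \<beta> \<gamma> :: "'n \<Rightarrow> nat" assume "\<beta> \<in> exps r" "\<gamma> \<in> exps r"
      then have "(\<lambda>l. \<beta> l + \<gamma> l) \<in> E" using exps_add rE by blast
      then show "v \<beta> * (\<Sum>\<alpha>\<in>E. mon \<alpha> x * (if \<alpha> = (\<lambda>k. \<beta> k + \<gamma> k) then 1 else 0)) * v \<gamma> = (v \<beta> * mon \<beta> x) * (v \<gamma> * mon \<gamma> x)"
        by (simp add: sum_delta_ind[OF fE] mon_add mult_ac)
    qed
    also have "\<dots> = (\<Sum>\<beta>\<in>exps r. v \<beta> * mon \<beta> x)^2" by (simp add: power2_eq_square sum_product)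
    finally show "0 \<le> (\<Sum>\<beta>\<in>exps r. \<Sum>\<gamma>\<in>exps r. v \<beta> * (\<Sum>\<alpha>\<in>E. mon \<alpha> x * (if \<alpha> = (\<lambda>k. \<beta> k + \<gamma> k) then 1 else 0)) * v \<gamma>)"
      by simp
  qed
  show ?thesis unfolding feas_Dt_def using g pj pm by (simp add: E_def)
qed


theorem theorem4:
  fixes m r :: nat
    and d :: "'n::finite \<Rightarrow> nat"
    and fc :: "('n \<Rightarrow> nat) \<Rightarrow> real"
    and gc :: "nat \<Rightarrow> ('n \<Rightarrow> nat) \<Rightarrow> real"
    and u :: "nat \<Rightarrow> 'n \<Rightarrow> real poly"
    and pc :: "nat \<Rightarrow> ('n \<Rightarrow> nat) \<Rightarrow> real"
  assumes f_poly: "is_mpoly fc"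
    and g_poly: "\<forall>i\<in>{1..m}. is_mpoly (gc i)"
    and f_convex: "convex_on UNIV (peval fc)"
    and g_convex: "\<forall>i\<in>{1..m}. convex_on UNIV (peval (gc i))"
    and u_deg: "\<forall>i\<le>m. \<forall>j. degree (u i j) \<le> 2 * d j"
    and u_convex: "\<forall>i\<le>m. \<forall>j. convex_on UNIV (poly (u i j))"
    and p_poly: "\<forall>i\<le>m. is_mpoly (pc i)"
    and p_deg: "\<forall>i\<le>m. mpoly_deg_le (2 * r) (pc i)"
    and p_sosconvex: "\<forall>i\<le>m. sos_convex (pc i)"
    and f_decomp: "\<forall>x. peval fc x = (\<Sum>j\<in>UNIV. poly (u 0 j) (x $ j)) + peval (pc 0) x"
    and g_decomp: "\<forall>i\<in>{1..m}. \<forall>x.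
                     peval (gc i) x = (\<Sum>j\<in>UNIV. poly (u i j) (x $ j)) + peval (pc i) x"
    and d0_gt: "d0 d > r"
    and bdd: "bdd_below (peval fc ` feas_CP m gc)"
    and slater: "\<exists>xh\<in>feas_CP m gc. \<forall>i\<in>{1..m}. peval (gc i) xh < 0"
  shows "(\<exists>lam \<sigma> \<sigma>s. feas_D m r d fc gc (val_CP m fc gc) lam \<sigma> \<sigma>s)
       \<and> (\<forall>\<mu> lam \<sigma> \<sigma>s. feas_D m r d fc gc \<mu> lam \<sigma> \<sigma>s \<longrightarrow> \<mu> \<le> val_CP m fc gc)
       \<and> {y. feas_Dt m r d gc y} \<noteq> {}
       \<and> bdd_below (obj_Dt d fc ` {y. feas_Dt m r d gc y})
       \<and> Inf (obj_Dt d fc ` {y. feas_Dt m r d gc y}) = val_CP m fc gc"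
proof -
  let ?F = "feas_CP m gc"
  let ?val = "val_CP m fc gc"
  have dd: "d j \<le> d0 d" for j by (rule d_le_d0)
  have rd: "r \<le> d0 d" using d0_gt by simp
  obtain xh where xh: "xh \<in> ?F" "\<forall>i\<in>{1..m}. peval (gc i) xh < 0" using slater by blast
  have Fne: "?F \<noteq> {}" using xh by blast
  have val_le: "?val \<le> peval fc x" if "x \<in> ?F" for x
    unfolding val_CP_def by (rule cInf_lower) (use that bdd in auto)
  have sep_pf: "pf (2 * d0 d) (\<lambda>x. \<Sum>j\<in>UNIV. poly (u i j) (x$j))" if "i \<le> m" for i
  proof (intro pf_sum pf_upoly)
    fix j
    have "degree (u i j) \<le> 2 * d j" using u_deg that by blast
    then show "degree (u i j) \<le> 2 * d0 d" using dd[of j] by linarith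
  qed simp
  have p_pf: "pf (2 * d0 d) (peval (pc i))" if "i \<le> m" for i
    using p_deg that by (intro pf_peval) (auto intro: mpoly_deg_le_mono simp: rd)
  have f_pf: "pf (2 * d0 d) (peval fc)"
    using pf_add[OF sep_pf[of 0] p_pf[of 0]] f_decomp by (simp add: pf_cong)
  have g_pf: "pf (2 * d0 d) (peval (gc i))" if "i \<in> {1..m}" for i
  proof -
    have im: "i \<le> m" using that by simp
    have "pf (2 * d0 d) (\<lambda>x. (\<Sum>j\<in>UNIV. poly (u i j) (x$j)) + peval (pc i) x)"
      using pf_add[OF sep_pf[OF im] p_pf[OF im]] .
    then show ?thesis by (rule pf_cong) (use g_decomp that in simp)
  qed
  have fsupp: "{\<alpha>. fc \<alpha> \<noteq> 0} \<subseteq> exps (2 * d0 d)" by (rule supp_from_pf[OF f_poly f_pf])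
  have gsupp: "\<forall>i\<in>{1..m}. {\<alpha>. gc i \<alpha> \<noteq> 0} \<subseteq> exps (2 * d0 d)"
    using supp_from_pf g_poly g_pf by blast
  have "\<exists>lam. (\<forall>i\<in>{1..m}. 0 \<le> lam i) \<and> (\<forall>x\<in>UNIV. ?val \<le> peval fc x + (\<Sum>i=1..m. lam i * peval (gc i) x))"
  proof (rule lagrange[of UNIV "peval fc" m "\<lambda>i. peval (gc i)" xh])
    show "\<forall>x\<in>UNIV. (\<forall>i\<in>{1..m}. peval (gc i) x \<le> 0) \<longrightarrow> ?val \<le> peval fc x"
      using val_le by (auto simp: feas_CP_def)
  qed (use f_convex g_convex xh in auto)
  then obtain lam where lam0: "\<forall>i\<in>{1..m}. 0 \<le> lam i"
    and lamb: "\<And>x. ?val \<le> peval fc x + (\<Sum>i=1..m. lam i * peval (gc i) x)" by blast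
  define Lg where "Lg = (\<lambda>x. peval fc x + (\<Sum>i=1..m. lam i * peval (gc i) x))"
  have Lg_pf: "pf (2 * d0 d) Lg"
    unfolding Lg_def by (intro pf_add f_pf pf_sum pf_cmult g_pf) auto
  have Lg_conv: "convex_on UNIV Lg"
    unfolding Lg_def using lam0 g_convex by (intro convex_on_add f_convex convex_on_wsum) auto
  have Lg_lb: "?val \<le> Lg x" for x using lamb by (simp add: Lg_def)
  obtain y where ymin: "\<And>x. Lg y \<le> Lg x" using attain[OF Lg_pf Lg_conv Lg_lb] by blast
  define w where "w = (\<lambda>j. u 0 j + (\<Sum>i=1..m. smult (lam i) (u i j)))"
  have poly_w: "poly (w j) t = poly (u 0 j) t + (\<Sum>i=1..m. lam i * poly (u i j) t)" for j t
    by (simp add: w_def poly_sum)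
  define Pf where "Pf = (\<lambda>x. peval (pc 0) x + (\<Sum>i=1..m. lam i * peval (pc i) x))"
  have Lg_dec: "Lg x = (\<Sum>j\<in>UNIV. poly (w j) (x$j)) + Pf x" for x
  proof -
    have g1: "(\<Sum>i=1..m. lam i * peval (gc i) x) = (\<Sum>i=1..m. lam i * (\<Sum>j\<in>UNIV. poly (u i j) (x$j)) + lam i * peval (pc i) x)"
      by (intro sum.cong refl) (simp add: g_decomp distrib_left)
    have g2: "(\<Sum>j\<in>UNIV. \<Sum>i=1..m. lam i * poly (u i j) (x$j)) = (\<Sum>i=1..m. lam i * (\<Sum>j\<in>UNIV. poly (u i j) (x$j)))"
      by (simp add: sum_distrib_left) (rule sum.swap)
    show ?thesis unfolding Lg_def Pf_def poly_w g1 sum.distrib g2 using f_decomp by simp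
  qed
  have fermat: "(\<Sum>j\<in>UNIV. (x$j - y$j) * poly (pderiv (w j)) (y$j))
      + (\<Sum>k\<in>UNIV. (x$k - y$k) * peval (pdiff k (pc 0)) y)
      + (\<Sum>i=1..m. lam i * (\<Sum>k\<in>UNIV. (x$k - y$k) * peval (pdiff k (pc i)) y)) = 0" for x
  proof -
    define v where "v = x - y"
    define D where "D = (\<Sum>j\<in>UNIV. poly (pderiv (w j)) (y$j + 0 * v$j) * v$j)
      + (\<Sum>k\<in>UNIV. v$k * peval (pdiff k (pc 0)) (y + 0 *\<^sub>R v))
      + (\<Sum>i=1..m. lam i * (\<Sum>k\<in>UNIV. v$k * peval (pdiff k (pc i)) (y + 0 *\<^sub>R v)))"
    have psi: "Lg (y + s *\<^sub>R v) = (\<Sum>j\<in>UNIV. poly (w j) (y$j + s * v$j)) + (peval (pc 0) (y + s *\<^sub>R v) + (\<Sum>i=1..m. lam i * peval (pc i) (y + s *\<^sub>R v)))" for s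
      by (simp add: Lg_dec Pf_def)
    have "DERIV (\<lambda>s. (\<Sum>j\<in>UNIV. poly (w j) (y$j + s * v$j)) + (peval (pc 0) (y + s *\<^sub>R v) + (\<Sum>i=1..m. lam i * peval (pc i) (y + s *\<^sub>R v)))) 0 :> D"
      unfolding D_def add.assoc
    proof (intro DERIV_add DERIV_sum DERIV_cmult)
      fix j
      show "((\<lambda>s. poly (w j) (y$j + s * v$j)) has_real_derivative poly (pderiv (w j)) (y$j + 0 * v$j) * v$j) (at 0)"
        by (rule DERIV_chain2[OF poly_DERIV]) (auto intro!: derivative_eq_intros)
    next
      show "((\<lambda>s. peval (pc 0) (y + s *\<^sub>R v)) has_real_derivative (\<Sum>k\<in>UNIV. v$k * peval (pdiff k (pc 0)) (y + 0 *\<^sub>R v))) (at 0)"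
        using p_poly by (intro peval_line_deriv) auto
    next
      fix i assume "i \<in> {1..m}"
      then show "((\<lambda>s. peval (pc i) (y + s *\<^sub>R v)) has_real_derivative (\<Sum>k\<in>UNIV. v$k * peval (pdiff k (pc i)) (y + 0 *\<^sub>R v))) (at 0)"
        using p_poly by (intro peval_line_deriv) auto
    qed
    then have dpsi: "DERIV (\<lambda>s. Lg (y + s *\<^sub>R v)) 0 :> D" unfolding psi .
    have "D = 0"
      by (rule DERIV_local_min[OF dpsi, of 1]) (use ymin in auto)
    then show ?thesis by (simp add: D_def v_def mult.commute)
  qed
  define \<sigma>s where "\<sigma>s = (\<lambda>j. w j - [:poly (w j) (y$j):] - smult (poly (pderiv (w j)) (y$j)) [:- (y$j), 1:])"
  have poly_\<sigma>s: "poly (\<sigma>s j) t = poly (w j) t - poly (w j) (y$j) - poly (pderiv (w j)) (y$j) * (t - y$j)" for j t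
    by (simp add: \<sigma>s_def algebra_simps)
  have w_conv: "convex_on UNIV (poly (w j))" for j
  proof -
    have "convex_on UNIV (\<lambda>t. poly (u 0 j) t + (\<Sum>i=1..m. lam i * poly (u i j) t))"
      using u_convex lam0 by (intro convex_on_add convex_on_wsum) auto
    moreover have "poly (w j) = (\<lambda>t. poly (u 0 j) t + (\<Sum>i=1..m. lam i * poly (u i j) t))"
      using poly_w by (simp add: fun_eq_iff)
    ultimately show ?thesis by simp
  qed
  have \<sigma>s_nn: "0 \<le> poly (\<sigma>s j) t" for j t
  proof -
    have "poly (pderiv (w j)) (y$j) * (t - y$j) \<le> poly (w j) t - poly (w j) (y$j)"
      by (rule convex_on_imp_above_tangent[OF w_conv]) (auto intro: poly_DERIV)
    then show ?thesis by (simp add: poly_\<sigma>s)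
  qed
  have deg_w: "degree (w j) \<le> 2 * d j" for j
    unfolding w_def using u_deg
    by (intro degree_add_le degree_sum_le) (auto intro: order_trans[OF degree_smult_le])
  have deg_\<sigma>s: "degree (\<sigma>s j) \<le> 2 * d j" for j
  proof (cases "d j = 0")
    case True
    then have "degree (w j) = 0" using deg_w[of j] by simp
    then have "pderiv (w j) = 0" by (simp add: pderiv_eq_0_iff)
    then show ?thesis using deg_w[of j] by (simp add: \<sigma>s_def degree_diff_le)
  next
    case False
    have "degree (smult (poly (pderiv (w j)) (y$j)) [:- (y$j), 1:]) \<le> 2 * d j"
      using False degree_smult_le[of "poly (pderiv (w j)) (y$j)" "[:- (y$j), 1:]"] by simp
    then show ?thesis unfolding \<sigma>s_def using deg_w[of j]
      by (intro degree_diff_le) auto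
  qed
  have \<sigma>s_sos: "sos_upoly (d j) (\<sigma>s j)" for j
  proof -
    have "sosU (degree (\<sigma>s j) div 2) (\<sigma>s j)" by (rule nonneg_sosU) (rule \<sigma>s_nn)
    then have "sosU (d j) (\<sigma>s j)" by (rule sosU_mono) (use deg_\<sigma>s[of j] in simp)
    then show ?thesis by (rule sosU_sos_upoly)
  qed
  define S where "S = (\<lambda>i x. peval (pc i) x - peval (pc i) y - (\<Sum>k\<in>UNIV. (x$k - y$k) * peval (pdiff k (pc i)) y))"
  have S_sos: "sosf r (S i)" if "i \<le> m" for i
    unfolding S_def using p_poly p_deg p_sosconvex that by (intro HN) auto
  define \<sigma> where "\<sigma> = (\<lambda>x. S 0 x + (\<Sum>i=1..m. lam i * S i x) + (Lg y - ?val))"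
  have \<sigma>_sos: "sos_mpoly r \<sigma>"
  proof -
    have "sosf r (\<lambda>x. S 0 x + (\<Sum>i=1..m. lam i * S i x) + (Lg y - ?val))"
      using lam0 Lg_lb[of y] by (intro sosf_add S_sos sosf_sum sosf_cmult sosf_const) auto
    then show ?thesis unfolding \<sigma>_def by (rule sosf_sos_mpoly)
  qed
  have ident: "peval fc x + (\<Sum>i=1..m. lam i * peval (gc i) x) - ?val = \<sigma> x + (\<Sum>j\<in>UNIV. poly (\<sigma>s j) (x $ j))" for x
  proof -
    have e1: "(\<Sum>i=1..m. lam i * S i x) = (\<Sum>i=1..m. lam i * peval (pc i) x) - (\<Sum>i=1..m. lam i * peval (pc i) y)
       - (\<Sum>i=1..m. lam i * (\<Sum>k\<in>UNIV. (x$k - y$k) * peval (pdiff k (pc i)) y))"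
      by (simp add: S_def right_diff_distrib sum_subtractf)
    have e2: "(\<Sum>j\<in>UNIV. poly (\<sigma>s j) (x $ j)) = (\<Sum>j\<in>UNIV. poly (w j) (x$j)) - (\<Sum>j\<in>UNIV. poly (w j) (y$j))
       - (\<Sum>j\<in>UNIV. (x$j - y$j) * poly (pderiv (w j)) (y$j))"
      by (simp add: poly_\<sigma>s sum_subtractf mult.commute)
    have e3: "Lg x = (\<Sum>j\<in>UNIV. poly (w j) (x$j)) + Pf x" by (rule Lg_dec)
    have e4: "Lg y = (\<Sum>j\<in>UNIV. poly (w j) (y$j)) + Pf y" by (rule Lg_dec)
    have e5: "S 0 x = peval (pc 0) x - peval (pc 0) y - (\<Sum>k\<in>UNIV. (x$k - y$k) * peval (pdiff k (pc 0)) y)"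
      by (simp add: S_def)
    have e0: "Lg x = peval fc x + (\<Sum>i=1..m. lam i * peval (gc i) x)" by (simp add: Lg_def)
    have e6: "Pf x = peval (pc 0) x + (\<Sum>i=1..m. lam i * peval (pc i) x)" by (simp add: Pf_def)
    have e7: "Pf y = peval (pc 0) y + (\<Sum>i=1..m. lam i * peval (pc i) y)" by (simp add: Pf_def)
    have e8: "\<sigma> x = S 0 x + (\<Sum>i=1..m. lam i * S i x) + (Lg y - ?val)" by (simp add: \<sigma>_def)
    show ?thesis using fermat[of x] e0 e1 e2 e3 e4 e5 e6 e7 e8 by linarith
  qed
  have D1: "feas_D m r d fc gc ?val lam \<sigma> \<sigma>s"
    unfolding feas_D_def using lam0 \<sigma>_sos \<sigma>s_sos ident by blast
  have D2: "\<mu> \<le> ?val" if fD: "feas_D m r d fc gc \<mu> lam' \<sigma>' \<sigma>s'" for \<mu> lam' \<sigma>' \<sigma>s'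
  proof -
    have l0: "\<forall>i\<in>{1..m}. 0 \<le> lam' i" and sm: "sos_mpoly r \<sigma>'" and su: "\<forall>j. sos_upoly (d j) (\<sigma>s' j)"
      and id': "\<forall>x. peval fc x + (\<Sum>i=1..m. lam' i * peval (gc i) x) - \<mu> = \<sigma>' x + (\<Sum>j\<in>UNIV. poly (\<sigma>s' j) (x $ j))"
      using fD by (auto simp: feas_D_def)
    have s1: "0 \<le> \<sigma>' x" for x
    proof -
      obtain K and q :: "nat \<Rightarrow> ('n \<Rightarrow> nat) \<Rightarrow> real" where "\<forall>x. \<sigma>' x = (\<Sum>k<K. (peval (q k) x)^2)"
        using sm unfolding sos_mpoly_def by blast
      then show ?thesis by (simp add: sum_nonneg)
    qed
    have s2: "0 \<le> poly (\<sigma>s' j) t" for j t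
    proof -
      obtain K and q :: "nat \<Rightarrow> real poly" where "\<sigma>s' j = (\<Sum>k<K. (q k)^2)"
        using su unfolding sos_upoly_def by blast
      then show ?thesis by (simp add: poly_sum sum_nonneg)
    qed
    show ?thesis unfolding val_CP_def
    proof (rule cInf_greatest)
      show "peval fc ` ?F \<noteq> {}" using Fne by simp
      fix z assume "z \<in> peval fc ` ?F"
      then obtain x where x: "x \<in> ?F" "z = peval fc x" by blast
      have "(\<Sum>i=1..m. lam' i * peval (gc i) x) \<le> 0"
        using x(1) l0 by (intro sum_nonpos) (auto simp: feas_CP_def mult_nonneg_nonpos)
      moreover have "0 \<le> \<sigma>' x + (\<Sum>j\<in>UNIV. poly (\<sigma>s' j) (x $ j))" using s1 s2 by (simp add: sum_nonneg)
      moreover have "peval fc x + (\<Sum>i=1..m. lam' i * peval (gc i) x) - \<mu> = \<sigma>' x + (\<Sum>j\<in>UNIV. poly (\<sigma>s' j) (x $ j))" using id' by blast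
      ultimately show "\<mu> \<le> z" using x(2) by linarith
    qed
  qed
  have Dt_ne: "{y. feas_Dt m r d gc y} \<noteq> {}" using dirac_feasible[OF gsupp rd xh(1)] by blast
  have Dt_lb: "?val \<le> obj_Dt d fc yy" if "feas_Dt m r d gc yy" for yy
    by (rule moment_lower[OF D1 that fsupp gsupp rd])
  have bddDt: "bdd_below (obj_Dt d fc ` {y. feas_Dt m r d gc y})"
    using Dt_lb by (auto simp: bdd_below_def)
  have "Inf (obj_Dt d fc ` {y. feas_Dt m r d gc y}) \<le> ?val"
    unfolding val_CP_def
  proof (rule cInf_greatest)
    show "peval fc ` ?F \<noteq> {}" using Fne by simp
    fix z assume "z \<in> peval fc ` ?F"
    then obtain x where x: "x \<in> ?F" "z = peval fc x" by blast
    have fx: "feas_Dt m r d gc (\<lambda>\<alpha>. mon \<alpha> x)" by (rule dirac_feasible[OF gsupp rd x(1)])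
    have "obj_Dt d fc (\<lambda>\<alpha>. mon \<alpha> x) = peval fc x"
      unfolding obj_Dt_def using peval_supp[OF finite_exps fsupp, of x] by simp
    moreover have "obj_Dt d fc (\<lambda>\<alpha>. mon \<alpha> x) \<in> obj_Dt d fc ` {y. feas_Dt m r d gc y}" using fx by blast
    then have "Inf (obj_Dt d fc ` {y. feas_Dt m r d gc y}) \<le> obj_Dt d fc (\<lambda>\<alpha>. mon \<alpha> x)"
      by (rule cInf_lower[OF _ bddDt])
    ultimately have "Inf (obj_Dt d fc ` {y. feas_Dt m r d gc y}) \<le> peval fc x" by simp
    then show "Inf (obj_Dt d fc ` {y. feas_Dt m r d gc y}) \<le> z" using x by simp
  qed
  moreover have "?val \<le> Inf (obj_Dt d fc ` {y. feas_Dt m r d gc y})"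
    by (rule cInf_greatest) (use Dt_ne Dt_lb in auto)
  ultimately have "Inf (obj_Dt d fc ` {y. feas_Dt m r d gc y}) = ?val" by simp
  then show ?thesis using D1 D2 Dt_ne bddDt by blast
qed


end
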